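(* Let $(\mathcal{B},\Psi)$ be a braided monoidal category, $H$ a Hopf algebra in $\mathcal{B}$ with invertible antipode $S$, and $A$ an algebra in $H\text{-}\mathbf{Mod}(\mathcal{B})$ with action $a_A$. Let $\varphi\colon H\otimes A\to A\otimes H$ be the isomorphism $\varphi=\Psi^{-1}_{H,A}(S^{-1}\otimes\mathrm{Id}_A)$, with inverse $\varphi^{-1}=\Psi_{A,H}(\mathrm{Id}_A\otimes S)$. Then the object $A\rtimes H=A\otimes H$ of $\mathcal{B}$ with $H$-action and $H$-coaction $$a^{\rtimes}=(\mathrm{Id}_A\otimes m_H)\Psi^{-1}_{H,A\otimes H}(S^{-1}\otimes a_{A\otimes H})(\Delta_H\otimes\mathrm{Id}_{A\otimes H}),\qquad \delta^{\rtimes}=(S\otimes\mathrm{Id}_{A\otimes H})\Psi_{A\otimes H,H}(\mathrm{Id}_A\otimes\Delta_H)$$ is an $H$-Yetter–Drinfeld module in $\mathcal{B}$, namely the one obtained by transporting the Yetter–Drinfeld structure of $\mathrm{R}_{\mathcal{B}}(A)=H\otimes A$ along $\varphi$, i.e. $a^{\rtimes}=\varphi a^{\mathrm{R}}(\mathrm{Id}_H\otimes\varphi^{-1})$ and $\delta^{\rtimes}=(\mathrm{Id}_H\otimes\varphi)\delta^{\mathrm{R}}\varphi^{-1}$; in particular $\varphi$ is an isomorphism of Yetter–Drinfeld modules.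
   Context: All categories are $\Bbbk$-linear abelian monoidal over a field $\Bbbk$. Notation: for objects $X,Y$, $\Psi^{-1}_{X,Y}:=(\Psi_{Y,X})^{-1}\colon X\otimes Y\to Y\otimes X$. $H\text{-}\mathbf{Mod}(\mathcal{B})$ is the monoidal category of left $H$-modules in $\mathcal{B}$, with $a_{V\otimes W}=(a_V\otimes a_W)(\mathrm{Id}_H\otimes\Psi_{H,V}\otimes\mathrm{Id}_W)(\Delta\otimes\mathrm{Id}_{V\otimes W})$; here $H$ acts on itself by left multiplication, so $a_{A\otimes H}$ is this formula with $a_H=m_H$. An $H$-Yetter–Drinfeld module in $\mathcal{B}$ is $(V,a_V,\delta_V)$ with $a_V$ a left $H$-action, $\delta_V$ a left $H$-coaction in $\mathcal{B}$, satisfying $(m\otimes a_V)(\mathrm{Id}_H\otimes\Psi_{H,H}\otimes\mathrm{Id}_V)(\Delta\otimes\delta_V)=(m\otimes\mathrm{Id}_V)(\mathrm{Id}_H\otimes\Psi_{V,H})(\delta_V\otimes\mathrm{Id}_H)(a_V\otimes\mathrm{Id}_H)(\mathrm{Id}_H\otimes\Psi_{H,V})(\Delta\otimes\mathrm{Id}_V)$. $\mathrm{R}_{\mathcal{B}}(A)$ is $H\otimes A$ with action $a^{\mathrm{R}}=(m\otimes\mathrm{Id}_A)(\mathrm{Id}_H\otimes\Psi_{A,H})(\mathrm{Id}_H\otimes a_A\otimes S)(\mathrm{Id}_{H\otimes H}\otimes\Psi_{H,A})(m\otimes\Delta\otimes\mathrm{Id}_A)(\mathrm{Id}_H\otimes\Psi_{H,H}\otimes\mathrm{Id}_A)(\Delta\otimes\mathrm{Id}_{H\otimes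 A})$ and coaction $\delta^{\mathrm{R}}=\Delta\otimes\mathrm{Id}_A$ (this is a Yetter–Drinfeld module in $\mathcal{B}$). $A\rtimes H$ denotes $A\otimes H$, the underlying object of the braided smash product algebra. *)

theory Defs
  imports Main
begin

text \<open>Composition Cmp C g f means g after f.\<close>

record ('o, 'm) bcat =
  Dom :: "'m \<Rightarrow> 'o"
  Cod :: "'m \<Rightarrow> 'o"
  Cmp :: "'m \<Rightarrow> 'm \<Rightarrow> 'm"
  Idm :: "'o \<Rightarrow> 'm"
  Tob :: "'o \<Rightarrow> 'o \<Rightarrow> 'o"
  Tm  :: "'m \<Rightarrow> 'm \<Rightarrow> 'm"
  Uob :: "'o"
  Br  :: "'o \<Rightarrow> 'o \<Rightarrow> 'm"

definition hom :: "('o,'m) bcat \<Rightarrow> 'm \<Rightarrow> 'o \<Rightarrow> 'o \<Rightarrow> bool" where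
  "hom C f X Y \<longleftrightarrow> Dom C f = X \<and> Cod C f = Y"

definition iso :: "('o,'m) bcat \<Rightarrow> 'm \<Rightarrow> bool" where
  "iso C f \<longleftrightarrow> (\<exists>g. hom C g (Cod C f) (Dom C f) \<and>
      Cmp C g f = Idm C (Dom C f) \<and> Cmp C f g = Idm C (Cod C f))"

definition inv :: "('o,'m) bcat \<Rightarrow> 'm \<Rightarrow> 'm" where
  "inv C f = (THE g. hom C g (Cod C f) (Dom C f) \<and>
      Cmp C g f = Idm C (Dom C f) \<and> Cmp C f g = Idm C (Cod C f))"

text \<open>Composite of a list of morphisms, written in the paper's order:
chain C [f1, f2, ..., fn] = f1 after f2 after ... after fn.\<close>
fun chain :: "('o,'m) bcat \<Rightarrow> 'm list \<Rightarrow> 'm" where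
  "chain C [] = undefined"
| "chain C [f] = f"
| "chain C (f # g # fs) = Cmp C f (chain C (g # fs))"

text \<open>Inverse braiding: Binv C X Y = (Br C Y X)^{-1} : X \<otimes> Y \<rightarrow> Y \<otimes> X.\<close>
definition Binv :: "('o,'m) bcat \<Rightarrow> 'o \<Rightarrow> 'o \<Rightarrow> 'm" where
  "Binv C X Y = inv C (Br C Y X)"

definition braided_monoidal_cat :: "('o,'m) bcat \<Rightarrow> bool" where
  "braided_monoidal_cat C \<longleftrightarrow>
    \<comment> \<open>category\<close>
    (\<forall>X. hom C (Idm C X) X X) \<and>
    (\<forall>f g. Cod C f = Dom C g \<longrightarrow> hom C (Cmp C g f) (Dom C f) (Cod C g)) \<and>
    (\<forall>f g h. Cod C f = Dom C g \<longrightarrow> Cod C g = Dom C h \<longrightarrow>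
        Cmp C h (Cmp C g f) = Cmp C (Cmp C h g) f) \<and>
    (\<forall>f. Cmp C f (Idm C (Dom C f)) = f \<and> Cmp C (Idm C (Cod C f)) f = f) \<and>
    \<comment> \<open>strict monoidal structure\<close>
    (\<forall>X Y Z. Tob C (Tob C X Y) Z = Tob C X (Tob C Y Z)) \<and>
    (\<forall>X. Tob C (Uob C) X = X \<and> Tob C X (Uob C) = X) \<and>
    (\<forall>f g. hom C (Tm C f g) (Tob C (Dom C f) (Dom C g)) (Tob C (Cod C f) (Cod C g))) \<and>
    (\<forall>X Y. Tm C (Idm C X) (Idm C Y) = Idm C (Tob C X Y)) \<and>
    (\<forall>f g f' g'. Cod C f = Dom C g \<longrightarrow> Cod C f' = Dom C g' \<longrightarrow>
        Tm C (Cmp C g f) (Cmp C g' f') = Cmp C (Tm C g g') (Tm C f f')) \<and>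
    (\<forall>f g h. Tm C (Tm C f g) h = Tm C f (Tm C g h)) \<and>
    (\<forall>f. Tm C (Idm C (Uob C)) f = f \<and> Tm C f (Idm C (Uob C)) = f) \<and>
    \<comment> \<open>braiding: natural isomorphism satisfying the hexagon axioms\<close>
    (\<forall>X Y. hom C (Br C X Y) (Tob C X Y) (Tob C Y X) \<and> iso C (Br C X Y)) \<and>
    (\<forall>f g. Cmp C (Br C (Cod C f) (Cod C g)) (Tm C f g)
           = Cmp C (Tm C g f) (Br C (Dom C f) (Dom C g))) \<and>
    (\<forall>X Y Z. Br C X (Tob C Y Z)
        = Cmp C (Tm C (Idm C Y) (Br C X Z)) (Tm C (Br C X Y) (Idm C Z))) \<and>
    (\<forall>X Y Z. Br C (Tob C X Y) Z
        = Cmp C (Tm C (Br C X Z) (Idm C Y)) (Tm C (Idm C X) (Br C Y Z)))"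

definition hopf_algebra ::
  "('o,'m) bcat \<Rightarrow> 'o \<Rightarrow> 'm \<Rightarrow> 'm \<Rightarrow> 'm \<Rightarrow> 'm \<Rightarrow> 'm \<Rightarrow> bool" where
  "hopf_algebra C H m u \<Delta> \<epsilon> S \<longleftrightarrow>
    (let I = Idm C H; HH = Tob C H H in
    hom C m HH H \<and> hom C u (Uob C) H \<and> hom C \<Delta> H HH \<and> hom C \<epsilon> H (Uob C) \<and>
    hom C S H H \<and>
    Cmp C m (Tm C m I) = Cmp C m (Tm C I m) \<and>
    Cmp C m (Tm C u I) = I \<and> Cmp C m (Tm C I u) = I \<and>
    Cmp C (Tm C \<Delta> I) \<Delta> = Cmp C (Tm C I \<Delta>) \<Delta> \<and>
    Cmp C (Tm C \<epsilon> I) \<Delta> = I \<and> Cmp C (Tm C I \<epsilon>) \<Delta> = I \<and>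
    Cmp C \<Delta> m = chain C [Tm C m m, Tm C (Tm C I (Br C H H)) I, Tm C \<Delta> \<Delta>] \<and>
    Cmp C \<Delta> u = Tm C u u \<and>
    Cmp C \<epsilon> m = Tm C \<epsilon> \<epsilon> \<and>
    Cmp C \<epsilon> u = Idm C (Uob C) \<and>
    chain C [m, Tm C S I, \<Delta>] = Cmp C u \<epsilon> \<and>
    chain C [m, Tm C I S, \<Delta>] = Cmp C u \<epsilon>)"

definition hmodule :: "('o,'m) bcat \<Rightarrow> 'o \<Rightarrow> 'm \<Rightarrow> 'm \<Rightarrow> 'o \<Rightarrow> 'm \<Rightarrow> bool" where
  "hmodule C H m u V a \<longleftrightarrow>
    hom C a (Tob C H V) V \<and>
    Cmp C a (Tm C m (Idm C V)) = Cmp C a (Tm C (Idm C H) a) \<and>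
    Cmp C a (Tm C u (Idm C V)) = Idm C V"

definition hcomodule :: "('o,'m) bcat \<Rightarrow> 'o \<Rightarrow> 'm \<Rightarrow> 'm \<Rightarrow> 'o \<Rightarrow> 'm \<Rightarrow> bool" where
  "hcomodule C H \<Delta> \<epsilon> V \<delta> \<longleftrightarrow>
    hom C \<delta> V (Tob C H V) \<and>
    Cmp C (Tm C \<Delta> (Idm C V)) \<delta> = Cmp C (Tm C (Idm C H) \<delta>) \<delta> \<and>
    Cmp C (Tm C \<epsilon> (Idm C V)) \<delta> = Idm C V"

definition tens_act :: "('o,'m) bcat \<Rightarrow> 'o \<Rightarrow> 'm \<Rightarrow> 'o \<Rightarrow> 'm \<Rightarrow> 'o \<Rightarrow> 'm \<Rightarrow> 'm" where
  "tens_act C H \<Delta> V aV W aW =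
    chain C [Tm C aV aW, Tm C (Tm C (Idm C H) (Br C H V)) (Idm C W),
             Tm C \<Delta> (Idm C (Tob C V W))]"

text \<open>Algebra (A, mA, uA) in H-Mod(C), with H-action aA; the unit object carries
the trivial action \<epsilon>.\<close>
definition hmod_algebra ::
  "('o,'m) bcat \<Rightarrow> 'o \<Rightarrow> 'm \<Rightarrow> 'm \<Rightarrow> 'm \<Rightarrow> 'm \<Rightarrow> 'o \<Rightarrow> 'm \<Rightarrow> 'm \<Rightarrow> 'm \<Rightarrow> bool" where
  "hmod_algebra C H m u \<Delta> \<epsilon> A aA mA uA \<longleftrightarrow>
    hmodule C H m u A aA \<and>
    hom C mA (Tob C A A) A \<and> hom C uA (Uob C) A \<and>
    Cmp C mA (Tm C mA (Idm C A)) = Cmp C mA (Tm C (Idm C A) mA) \<and>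
    Cmp C mA (Tm C uA (Idm C A)) = Idm C A \<and>
    Cmp C mA (Tm C (Idm C A) uA) = Idm C A \<and>
    Cmp C aA (Tm C (Idm C H) mA) = Cmp C mA (tens_act C H \<Delta> A aA A aA) \<and>
    Cmp C aA (Tm C (Idm C H) uA) = Cmp C uA \<epsilon>"

definition yd_module ::
  "('o,'m) bcat \<Rightarrow> 'o \<Rightarrow> 'm \<Rightarrow> 'm \<Rightarrow> 'm \<Rightarrow> 'm \<Rightarrow> 'o \<Rightarrow> 'm \<Rightarrow> 'm \<Rightarrow> bool" where
  "yd_module C H m u \<Delta> \<epsilon> V a \<delta> \<longleftrightarrow>
    hmodule C H m u V a \<and> hcomodule C H \<Delta> \<epsilon> V \<delta> \<and>
    chain C [Tm C m a, Tm C (Tm C (Idm C H) (Br C H H)) (Idm C V), Tm C \<Delta> \<delta>]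
    = chain C [Tm C m (Idm C V), Tm C (Idm C H) (Br C V H), Tm C \<delta> (Idm C H),
               Tm C a (Idm C H), Tm C (Idm C H) (Br C H V), Tm C \<Delta> (Idm C V)]"

definition yd_morphism ::
  "('o,'m) bcat \<Rightarrow> 'o \<Rightarrow> 'o \<Rightarrow> 'm \<Rightarrow> 'm \<Rightarrow> 'o \<Rightarrow> 'm \<Rightarrow> 'm \<Rightarrow> 'm \<Rightarrow> bool" where
  "yd_morphism C H V aV \<delta>V W aW \<delta>W f \<longleftrightarrow>
    hom C f V W \<and>
    Cmp C aW (Tm C (Idm C H) f) = Cmp C f aV \<and>
    Cmp C \<delta>W f = Cmp C (Tm C (Idm C H) f) \<delta>V"

definition R_act :: "('o,'m) bcat \<Rightarrow> 'o \<Rightarrow> 'm \<Rightarrow> 'm \<Rightarrow> 'm \<Rightarrow> 'o \<Rightarrow> 'm \<Rightarrow> 'm" where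
  "R_act C H m \<Delta> S A aA =
    (let IH = Idm C H; IA = Idm C A in
     chain C [Tm C m IA, Tm C IH (Br C A H), Tm C (Tm C IH aA) S,
              Tm C (Idm C (Tob C H H)) (Br C H A), Tm C (Tm C m \<Delta>) IA,
              Tm C (Tm C IH (Br C H H)) IA, Tm C \<Delta> (Idm C (Tob C H A))])"

definition R_coact :: "('o,'m) bcat \<Rightarrow> 'm \<Rightarrow> 'o \<Rightarrow> 'm" where
  "R_coact C \<Delta> A = Tm C \<Delta> (Idm C A)"

definition smash_act :: "('o,'m) bcat \<Rightarrow> 'o \<Rightarrow> 'm \<Rightarrow> 'm \<Rightarrow> 'm \<Rightarrow> 'o \<Rightarrow> 'm \<Rightarrow> 'm" where
  "smash_act C H m \<Delta> S A aA =
    chain C [Tm C (Idm C A) m, Binv C H (Tob C A H),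
             Tm C (inv C S) (tens_act C H \<Delta> A aA H m),
             Tm C \<Delta> (Idm C (Tob C A H))]"

definition smash_coact :: "('o,'m) bcat \<Rightarrow> 'o \<Rightarrow> 'm \<Rightarrow> 'm \<Rightarrow> 'o \<Rightarrow> 'm" where
  "smash_coact C H \<Delta> S A =
    chain C [Tm C S (Idm C (Tob C A H)), Br C (Tob C A H) H, Tm C (Idm C A) \<Delta>]"

definition phi :: "('o,'m) bcat \<Rightarrow> 'o \<Rightarrow> 'm \<Rightarrow> 'o \<Rightarrow> 'm" where
  "phi C H S A = Cmp C (Binv C H A) (Tm C (inv C S) (Idm C A))"

end

theory Submission
  imports Defs
begin


locale bmc =
  fixes C :: "('o,'m) bcat"
  assumes bmc: "braided_monoidal_cat C"
begin

lemmas ax = bmc[unfolded braided_monoidal_cat_def]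

lemma id_hom: "hom C (Idm C X) X X" using ax[THEN conjunct1] by blast
lemma cmp_hom: "Cod C f = Dom C g \<Longrightarrow> hom C (Cmp C g f) (Dom C f) (Cod C g)"
  using ax[THEN conjunct2, THEN conjunct1] by blast
lemma cmp_assoc: "Cod C f = Dom C g \<Longrightarrow> Cod C g = Dom C h \<Longrightarrow>
        Cmp C h (Cmp C g f) = Cmp C (Cmp C h g) f"
  using ax[THEN conjunct2, THEN conjunct2, THEN conjunct1] by blast
lemma cmp_id_r: "Cmp C f (Idm C (Dom C f)) = f" using ax[THEN conjunct2, THEN conjunct2, THEN conjunct2, THEN conjunct1] by blast
lemma cmp_id_l: "Cmp C (Idm C (Cod C f)) f = f" using ax[THEN conjunct2, THEN conjunct2, THEN conjunct2, THEN conjunct1] by blast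
lemma tob_assoc: "Tob C (Tob C X Y) Z = Tob C X (Tob C Y Z)" using ax[THEN conjunct2, THEN conjunct2, THEN conjunct2, THEN conjunct2, THEN conjunct1] by blast
lemma tob_unit_l: "Tob C (Uob C) X = X" using ax[THEN conjunct2, THEN conjunct2, THEN conjunct2, THEN conjunct2, THEN conjunct2, THEN conjunct1] by blast
lemma tob_unit_r: "Tob C X (Uob C) = X" using ax[THEN conjunct2, THEN conjunct2, THEN conjunct2, THEN conjunct2, THEN conjunct2, THEN conjunct1] by blast
lemma tm_hom: "hom C (Tm C f g) (Tob C (Dom C f) (Dom C g)) (Tob C (Cod C f) (Cod C g))"
  using ax[THEN conjunct2, THEN conjunct2, THEN conjunct2, THEN conjunct2, THEN conjunct2, THEN conjunct2, THEN conjunct1] by blast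
lemma tm_id: "Tm C (Idm C X) (Idm C Y) = Idm C (Tob C X Y)" using ax[THEN conjunct2, THEN conjunct2, THEN conjunct2, THEN conjunct2, THEN conjunct2, THEN conjunct2, THEN conjunct2, THEN conjunct1] by blast
lemma interchange: "Cod C f = Dom C g \<Longrightarrow> Cod C f' = Dom C g' \<Longrightarrow>
        Tm C (Cmp C g f) (Cmp C g' f') = Cmp C (Tm C g g') (Tm C f f')"
  using ax[THEN conjunct2, THEN conjunct2, THEN conjunct2, THEN conjunct2, THEN conjunct2, THEN conjunct2, THEN conjunct2, THEN conjunct2, THEN conjunct1] by blast
lemma tm_assoc: "Tm C (Tm C f g) h = Tm C f (Tm C g h)" using ax[THEN conjunct2, THEN conjunct2, THEN conjunct2, THEN conjunct2, THEN conjunct2, THEN conjunct2, THEN conjunct2, THEN conjunct2, THEN conjunct2, THEN conjunct1] by blast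
lemma tm_unit_l: "Tm C (Idm C (Uob C)) f = f" using ax[THEN conjunct2, THEN conjunct2, THEN conjunct2, THEN conjunct2, THEN conjunct2, THEN conjunct2, THEN conjunct2, THEN conjunct2, THEN conjunct2, THEN conjunct2, THEN conjunct1] by blast
lemma tm_unit_r: "Tm C f (Idm C (Uob C)) = f" using ax[THEN conjunct2, THEN conjunct2, THEN conjunct2, THEN conjunct2, THEN conjunct2, THEN conjunct2, THEN conjunct2, THEN conjunct2, THEN conjunct2, THEN conjunct2, THEN conjunct1] by blast
lemma br_hom: "hom C (Br C X Y) (Tob C X Y) (Tob C Y X)" using ax[THEN conjunct2, THEN conjunct2, THEN conjunct2, THEN conjunct2, THEN conjunct2, THEN conjunct2, THEN conjunct2, THEN conjunct2, THEN conjunct2, THEN conjunct2, THEN conjunct2, THEN conjunct1] by blast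
lemma br_iso: "iso C (Br C X Y)" using ax[THEN conjunct2, THEN conjunct2, THEN conjunct2, THEN conjunct2, THEN conjunct2, THEN conjunct2, THEN conjunct2, THEN conjunct2, THEN conjunct2, THEN conjunct2, THEN conjunct2, THEN conjunct1] by blast
lemma br_nat: "Cmp C (Br C (Cod C f) (Cod C g)) (Tm C f g) = Cmp C (Tm C g f) (Br C (Dom C f) (Dom C g))"
  using ax[THEN conjunct2, THEN conjunct2, THEN conjunct2, THEN conjunct2, THEN conjunct2, THEN conjunct2, THEN conjunct2, THEN conjunct2, THEN conjunct2, THEN conjunct2, THEN conjunct2, THEN conjunct2, THEN conjunct1] by blast
lemma hex1: "Br C X (Tob C Y Z) = Cmp C (Tm C (Idm C Y) (Br C X Z)) (Tm C (Br C X Y) (Idm C Z))"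
  using ax[THEN conjunct2, THEN conjunct2, THEN conjunct2, THEN conjunct2, THEN conjunct2, THEN conjunct2, THEN conjunct2, THEN conjunct2, THEN conjunct2, THEN conjunct2, THEN conjunct2, THEN conjunct2, THEN conjunct2, THEN conjunct1] by blast
lemma hex2: "Br C (Tob C X Y) Z = Cmp C (Tm C (Br C X Z) (Idm C Y)) (Tm C (Idm C X) (Br C Y Z))"
  using ax[THEN conjunct2, THEN conjunct2, THEN conjunct2, THEN conjunct2, THEN conjunct2, THEN conjunct2, THEN conjunct2, THEN conjunct2, THEN conjunct2, THEN conjunct2, THEN conjunct2, THEN conjunct2, THEN conjunct2, THEN conjunct2] by blast

lemma dom_id[simp]: "Dom C (Idm C X) = X" and cod_id[simp]: "Cod C (Idm C X) = X"
  using id_hom[of X] by (auto simp: hom_def)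
lemma dom_cmp[simp]: "Cod C f = Dom C g \<Longrightarrow> Dom C (Cmp C g f) = Dom C f"
  and cod_cmp[simp]: "Cod C f = Dom C g \<Longrightarrow> Cod C (Cmp C g f) = Cod C g"
  using cmp_hom[of f g] by (auto simp: hom_def)
lemma dom_tm[simp]: "Dom C (Tm C f g) = Tob C (Dom C f) (Dom C g)"
  and cod_tm[simp]: "Cod C (Tm C f g) = Tob C (Cod C f) (Cod C g)"
  using tm_hom[of f g] by (auto simp: hom_def)
lemma dom_br[simp]: "Dom C (Br C X Y) = Tob C X Y" and cod_br[simp]: "Cod C (Br C X Y) = Tob C Y X"
  using br_hom[of X Y] by (auto simp: hom_def)

lemma cmp_idl[simp]: "Cod C f = X \<Longrightarrow> Cmp C (Idm C X) f = f" using cmp_id_l by blast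
lemma cmp_idr[simp]: "Dom C f = X \<Longrightarrow> Cmp C f (Idm C X) = f" using cmp_id_r by blast

lemmas obj_simps[simp] = tob_assoc tob_unit_l tob_unit_r tm_assoc tm_unit_l tm_unit_r

lemma idm_split: "Idm C (Tob C X Y) = Tm C (Idm C X) (Idm C Y)" by (simp add: tm_id)

lemma cancel_l: "Cmp C i g = Idm C (Dom C g) \<Longrightarrow> Cod C f = Dom C g \<Longrightarrow> Cod C g = Dom C i \<Longrightarrow>
   Cmp C i (Cmp C g f) = f"
  by (simp add: cmp_assoc)

lemma cmp_assoc_r: "Cod C f = Dom C g \<Longrightarrow> Cod C g = Dom C h \<Longrightarrow>
        Cmp C (Cmp C h g) f = Cmp C h (Cmp C g f)" by (simp add: cmp_assoc)

lemma interchange_r: "Dom C g = Cod C f \<Longrightarrow> Dom C g' = Cod C f' \<Longrightarrow>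
        Cmp C (Tm C g g') (Tm C f f') = Tm C (Cmp C g f) (Cmp C g' f')"
  by (simp add: interchange)

lemma inv_unique:
  assumes "hom C g (Cod C f) (Dom C f)" "Cmp C g f = Idm C (Dom C f)" "Cmp C f g = Idm C (Cod C f)"
  shows "inv C f = g"
proof -
  have u: "h = g" if h: "hom C h (Cod C f) (Dom C f)" "Cmp C h f = Idm C (Dom C f)" "Cmp C f h = Idm C (Cod C f)" for h
  proof -
    have "h = Cmp C h (Idm C (Cod C f))" using h by (simp add: hom_def)
    also have "\<dots> = Cmp C h (Cmp C f g)" using assms by simp
    also have "\<dots> = Cmp C (Cmp C h f) g" using h assms by (intro cmp_assoc) (auto simp: hom_def)
    also have "\<dots> = g" using h assms by (simp add: hom_def)
    finally show ?thesis .
  qed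
  show ?thesis unfolding inv_def
  proof (rule the_equality)
    show "hom C g (Cod C f) (Dom C f) \<and> Cmp C g f = Idm C (Dom C f) \<and> Cmp C f g = Idm C (Cod C f)"
      using assms by blast
  qed (use u in blast)
qed

lemma inv_props:
  assumes "iso C f"
  shows "hom C (inv C f) (Cod C f) (Dom C f)" "Cmp C (inv C f) f = Idm C (Dom C f)"
        "Cmp C f (inv C f) = Idm C (Cod C f)"
proof -
  obtain g where g: "hom C g (Cod C f) (Dom C f)" "Cmp C g f = Idm C (Dom C f)" "Cmp C f g = Idm C (Cod C f)"
    using assms unfolding iso_def by blast
  then have "inv C f = g" by (rule inv_unique)
  then show "hom C (inv C f) (Cod C f) (Dom C f)" "Cmp C (inv C f) f = Idm C (Dom C f)"
        "Cmp C f (inv C f) = Idm C (Cod C f)" using g by auto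
qed


lemma iso_id: "iso C (Idm C X)"
  unfolding iso_def by (rule exI[of _ "Idm C X"]) (simp add: hom_def)

lemma inv_id: "inv C (Idm C X) = Idm C X"
  by (rule inv_unique) (simp_all add: hom_def)

lemma iso_hom_inv: "iso C f \<Longrightarrow> Dom C (inv C f) = Cod C f \<and> Cod C (inv C f) = Dom C f"
  using inv_props(1) by (auto simp: hom_def)

lemma inv_cmp:
  assumes f: "iso C f" and g: "iso C g" and c: "Cod C f = Dom C g"
  shows "iso C (Cmp C g f) \<and> inv C (Cmp C g f) = Cmp C (inv C f) (inv C g)"
proof -
  note F = inv_props[OF f] and G = inv_props[OF g]
  have h: "hom C (Cmp C (inv C f) (inv C g)) (Cod C (Cmp C g f)) (Dom C (Cmp C g f))"
    using F G c by (simp add: hom_def)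
  have l: "Cmp C (Cmp C (inv C f) (inv C g)) (Cmp C g f) = Idm C (Dom C (Cmp C g f))"
  proof -
    show ?thesis using F G c by (simp add: hom_def cmp_assoc_r cancel_l)
  qed
  have r: "Cmp C (Cmp C g f) (Cmp C (inv C f) (inv C g)) = Idm C (Cod C (Cmp C g f))"
  proof -
    show ?thesis using F G c by (simp add: hom_def cmp_assoc_r cancel_l)
  qed
  show ?thesis using h l r inv_unique[OF h l r] unfolding iso_def by blast
qed

lemma inv_tm:
  assumes f: "iso C f" and g: "iso C g"
  shows "iso C (Tm C f g) \<and> inv C (Tm C f g) = Tm C (inv C f) (inv C g)"
proof -
  note F = inv_props[OF f] and G = inv_props[OF g]
  have h: "hom C (Tm C (inv C f) (inv C g)) (Cod C (Tm C f g)) (Dom C (Tm C f g))"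
    using F G by (simp add: hom_def)
  have l: "Cmp C (Tm C (inv C f) (inv C g)) (Tm C f g) = Idm C (Dom C (Tm C f g))"
    using F G by (simp add: hom_def interchange_r tm_id)
  have r: "Cmp C (Tm C f g) (Tm C (inv C f) (inv C g)) = Idm C (Cod C (Tm C f g))"
    using F G by (simp add: hom_def interchange_r tm_id)
  show ?thesis using h l r inv_unique[OF h l r] unfolding iso_def by blast
qed

lemma inv_nat:
  assumes a: "iso C al" and b: "iso C be" and e: "Cmp C be f = Cmp C g al"
    and t: "Cod C f = Dom C be" "Dom C f = Dom C al" "Dom C g = Cod C al" "Cod C g = Cod C be"
  shows "Cmp C f (inv C al) = Cmp C (inv C be) g"
proof -
  note A = inv_props[OF a] and B = inv_props[OF b]
  have 1: "Cmp C (inv C be) g = Cmp C (inv C be) (Cmp C g (Cmp C al (inv C al)))"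
    using A t by (simp add: hom_def)
  have 2: "Cmp C g (Cmp C al (inv C al)) = Cmp C (Cmp C g al) (inv C al)"
    using A t by (intro cmp_assoc) (auto simp: hom_def)
  have 3: "Cmp C (Cmp C be f) (inv C al) = Cmp C be (Cmp C f (inv C al))"
    using A B t by (intro cmp_assoc_r) (auto simp: hom_def)
  have 4: "Cmp C (inv C be) (Cmp C be (Cmp C f (inv C al))) = Cmp C f (inv C al)"
    using A B t by (intro cancel_l) (auto simp: hom_def)
  show ?thesis using 1 2 3 4 e by simp
qed

lemma br_unit_l: "Br C (Uob C) X = Idm C X"
proof -
  define B where "B = Br C (Uob C) X"
  have hB: "Dom C B = X" "Cod C B = X" by (simp_all add: B_def)
  have "Br C (Tob C (Uob C) (Uob C)) X = Cmp C (Tm C (Br C (Uob C) X) (Idm C (Uob C))) (Tm C (Idm C (Uob C)) (Br C (Uob C) X))"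
    by (rule hex2)
  then have BB: "B = Cmp C B B" by (simp add: B_def)
  obtain g where g: "hom C g X X" "Cmp C g B = Idm C X" using br_iso[of "Uob C" X] hB
    unfolding iso_def B_def by auto
  have "Idm C X = Cmp C g (Cmp C B B)" using g BB by simp
  also have "\<dots> = Cmp C (Cmp C g B) B" using g hB by (simp add: hom_def cmp_assoc)
  also have "\<dots> = B" using g hB by simp
  finally show ?thesis by (simp add: B_def)
qed

lemma br_unit_r: "Br C X (Uob C) = Idm C X"
proof -
  define B where "B = Br C X (Uob C)"
  have hB: "Dom C B = X" "Cod C B = X" by (simp_all add: B_def)
  have "Br C X (Tob C (Uob C) (Uob C)) = Cmp C (Tm C (Idm C (Uob C)) (Br C X (Uob C))) (Tm C (Br C X (Uob C)) (Idm C (Uob C)))"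
    by (rule hex1)
  then have BB: "B = Cmp C B B" by (simp add: B_def)
  obtain g where g: "hom C g X X" "Cmp C g B = Idm C X" using br_iso[of X "Uob C"] hB
    unfolding iso_def B_def by auto
  have "Idm C X = Cmp C g (Cmp C B B)" using g BB by simp
  also have "\<dots> = Cmp C (Cmp C g B) B" using g hB by (simp add: hom_def cmp_assoc)
  also have "\<dots> = B" using g hB by simp
  finally show ?thesis by (simp add: B_def)
qed

lemma binv_hom[simp]: "Dom C (Binv C X Y) = Tob C X Y" "Cod C (Binv C X Y) = Tob C Y X"
  using iso_hom_inv[OF br_iso[of Y X]] by (simp_all add: Binv_def)

end


section \<open>Syntactic diagrams\<close>

datatype gen = Gm | Gu | GD | Ge | GS | GSi | Ga | Gb nat nat | Gbi nat nat
  | GaR | GaS | GdS | GP | GPi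

fun gdom :: "gen \<Rightarrow> nat list" where
  "gdom Gm = [0,0]" | "gdom Gu = []" | "gdom GD = [0]" | "gdom Ge = [0]" | "gdom GS = [0]"
| "gdom GSi = [0]" | "gdom Ga = [0,1]" | "gdom (Gb x y) = [x,y]" | "gdom (Gbi x y) = [x,y]"
| "gdom GaR = [0,0,1]" | "gdom GaS = [0,1,0]" | "gdom GdS = [1,0]" | "gdom GP = [0,1]" | "gdom GPi = [1,0]"

fun gcod :: "gen \<Rightarrow> nat list" where
  "gcod Gm = [0]" | "gcod Gu = [0]" | "gcod GD = [0,0]" | "gcod Ge = []" | "gcod GS = [0]"
| "gcod GSi = [0]" | "gcod Ga = [1]" | "gcod (Gb x y) = [y,x]" | "gcod (Gbi x y) = [y,x]"
| "gcod GaR = [0,1]" | "gcod GaS = [1,0]" | "gcod GdS = [0,1,0]" | "gcod GP = [1,0]" | "gcod GPi = [0,1]"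

type_synonym lay = "nat \<times> gen"
type_synonym rule = "nat list \<times> lay list \<times> lay list"

definition ap :: "nat \<Rightarrow> gen \<Rightarrow> nat list \<Rightarrow> nat list" where
  "ap n g W = take n W @ gcod g @ drop (n + length (gdom g)) W"

fun wires :: "nat list \<Rightarrow> lay list \<Rightarrow> nat list" where
  "wires W [] = W"
| "wires W ((n,g)#d) = wires (ap n g W) d"

definition fits :: "nat \<Rightarrow> nat list \<Rightarrow> nat list \<Rightarrow> bool" where
  "fits n dg W = (n + length dg \<le> length W \<and> take (length dg) (drop n W) = dg)"

fun wt :: "nat list \<Rightarrow> lay list \<Rightarrow> bool" where
  "wt W [] = True"
| "wt W ((n,g)#d) = (fits n (gdom g) W \<and> wt (ap n g W) d)"

definition shift :: "nat \<Rightarrow> lay list \<Rightarrow> lay list" where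
  "shift p l = map (\<lambda>(n,g). (n+p,g)) l"

fun swp :: "lay \<Rightarrow> lay \<Rightarrow> (lay \<times> lay) option" where
  "swp (n1,g1) (n2,g2) =
    (if n1 + length (gcod g1) \<le> n2 then Some ((n2 + length (gdom g1) - length (gcod g1), g2), (n1,g1))
     else if n2 + length (gdom g2) \<le> n1 then Some ((n2,g2), (n1 + length (gcod g2) - length (gdom g2), g1))
     else None)"

fun swap_at :: "nat \<Rightarrow> lay list \<Rightarrow> lay list option" where
  "swap_at 0 (a#b#d) = (case swp a b of None \<Rightarrow> None | Some (b',a') \<Rightarrow> Some (b'#a'#d))"
| "swap_at (Suc i) (a#d) = map_option (Cons a) (swap_at i d)"
| "swap_at _ _ = None"

fun rw_at :: "nat \<Rightarrow> nat \<Rightarrow> rule \<Rightarrow> nat list \<Rightarrow> lay list \<Rightarrow> lay list option" where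
  "rw_at 0 p (X,l,r) W d =
     (if fits p X W \<and> take (length l) d = shift p l
      then Some (shift p r @ drop (length l) d) else None)"
| "rw_at (Suc i) p R W (a#d) = map_option (Cons a) (rw_at i p R (ap (fst a) (snd a) W) d)"
| "rw_at (Suc i) p R W [] = None"

datatype op = Sw nat | Rw nat nat rule | Rv nat nat rule

fun rrev :: "rule \<Rightarrow> rule" where "rrev (X,l,r) = (X,r,l)"

fun run :: "nat list \<Rightarrow> op list \<Rightarrow> lay list \<Rightarrow> lay list option" where
  "run W [] d = Some d"
| "run W (Sw i # os) d = (case swap_at i d of None \<Rightarrow> None | Some d' \<Rightarrow> run W os d')"
| "run W (Rw i p R # os) d = (case rw_at i p R W d of None \<Rightarrow> None | Some d' \<Rightarrow> run W os d')"
| "run W (Rv i p R # os) d = (case rw_at i p (rrev R) W d of None \<Rightarrow> None | Some d' \<Rightarrow> run W os d')"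

fun oprules :: "op list \<Rightarrow> rule list" where
  "oprules [] = []"
| "oprules (Sw i # os) = oprules os"
| "oprules (Rw i p R # os) = R # oprules os"
| "oprules (Rv i p R # os) = R # oprules os"

section \<open>Semantics\<close>

fun obs :: "('o,'m) bcat \<Rightarrow> (nat \<Rightarrow> 'o) \<Rightarrow> nat list \<Rightarrow> 'o" where
  "obs C obj [] = Uob C"
| "obs C obj (x#xs) = Tob C (obj x) (obs C obj xs)"

fun brL :: "nat list \<Rightarrow> nat \<Rightarrow> lay list" where
  "brL [] y = []" | "brL (x#xs) y = shift 1 (brL xs y) @ [(0, Gb x y)]"
fun brR :: "nat \<Rightarrow> nat list \<Rightarrow> lay list" where
  "brR y [] = []" | "brR y (x#xs) = (0, Gb y x) # shift 1 (brR y xs)"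
fun biL :: "nat list \<Rightarrow> nat \<Rightarrow> lay list" where
  "biL [] y = []" | "biL (x#xs) y = shift 1 (biL xs y) @ [(0, Gbi x y)]"
fun biR :: "nat \<Rightarrow> nat list \<Rightarrow> lay list" where
  "biR y [] = []" | "biR y (x#xs) = (0, Gbi y x) # shift 1 (biR y xs)"

datatype ex = EG gen | EI "nat list" | EC ex ex | ET ex ex
  | EBL "nat list" nat | EBR nat "nat list" | EIL "nat list" nat | EIR nat "nat list"

fun edom :: "ex \<Rightarrow> nat list" and ecod :: "ex \<Rightarrow> nat list" where
  "edom (EG g) = gdom g" | "edom (EI xs) = xs" | "edom (EC e1 e2) = edom e2" | "edom (ET e1 e2) = edom e1 @ edom e2"
| "edom (EBL xs y) = xs @ [y]" | "edom (EBR y xs) = y # xs" | "edom (EIL xs y) = xs @ [y]" | "edom (EIR y xs) = y # xs"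
| "ecod (EG g) = gcod g" | "ecod (EI xs) = xs" | "ecod (EC e1 e2) = ecod e1" | "ecod (ET e1 e2) = ecod e1 @ ecod e2"
| "ecod (EBL xs y) = y # xs" | "ecod (EBR y xs) = xs @ [y]" | "ecod (EIL xs y) = y # xs" | "ecod (EIR y xs) = xs @ [y]"

fun ewt :: "ex \<Rightarrow> bool" where
  "ewt (EG g) = True" | "ewt (EI xs) = True"
| "ewt (EC e1 e2) = (ewt e1 \<and> ewt e2 \<and> ecod e2 = edom e1)"
| "ewt (ET e1 e2) = (ewt e1 \<and> ewt e2)"
| "ewt (EBL xs y) = True" | "ewt (EBR y xs) = True" | "ewt (EIL xs y) = True" | "ewt (EIR y xs) = True"

fun cmpl :: "ex \<Rightarrow> lay list" where
  "cmpl (EG g) = [(0,g)]" | "cmpl (EI xs) = []" | "cmpl (EC e1 e2) = cmpl e2 @ cmpl e1"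
| "cmpl (ET e1 e2) = cmpl e1 @ shift (length (ecod e1)) (cmpl e2)"
| "cmpl (EBL xs y) = brL xs y" | "cmpl (EBR y xs) = brR y xs" | "cmpl (EIL xs y) = biL xs y" | "cmpl (EIR y xs) = biR y xs"

definition mkrule :: "ex \<Rightarrow> ex \<Rightarrow> rule" where
  "mkrule e1 e2 = (edom e1, cmpl e1, cmpl e2)"

definition natBL :: "gen \<Rightarrow> nat \<Rightarrow> rule" where
  "natBL g y = (gdom g @ [y], (0,g) # brL (gcod g) y, brL (gdom g) y @ [(1,g)])"
definition natBR :: "nat \<Rightarrow> gen \<Rightarrow> rule" where
  "natBR y g = (y # gdom g, (1,g) # brR y (gcod g), brR y (gdom g) @ [(0,g)])"
definition natIL :: "gen \<Rightarrow> nat \<Rightarrow> rule" where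
  "natIL g y = (gdom g @ [y], (0,g) # biL (gcod g) y, biL (gdom g) y @ [(1,g)])"
definition natIR :: "nat \<Rightarrow> gen \<Rightarrow> rule" where
  "natIR y g = (y # gdom g, (1,g) # biR y (gcod g), biR y (gdom g) @ [(0,g)])"
definition cancBI :: "nat \<Rightarrow> nat \<Rightarrow> rule" where
  "cancBI x y = ([x,y], [(0,Gbi x y),(0,Gb y x)], [])"
definition cancIB :: "nat \<Rightarrow> nat \<Rightarrow> rule" where
  "cancIB x y = ([y,x], [(0,Gb y x),(0,Gbi x y)], [])"

locale eng = bmc C for C :: "('o,'m) bcat" +
  fixes obj :: "nat \<Rightarrow> 'o" and gi :: "gen \<Rightarrow> 'm"
  assumes gok: "hom C (gi g) (obs C obj (gdom g)) (obs C obj (gcod g))"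
    and gi_b: "gi (Gb x y) = Br C (obj x) (obj y)"
    and gi_bi: "gi (Gbi x y) = Binv C (obj x) (obj y)"
begin

abbreviation ob where "ob \<equiv> obs C obj"

lemma ob_append[simp]: "ob (xs @ ys) = Tob C (ob xs) (ob ys)"
  by (induction xs) auto

lemma dom_gi[simp]: "Dom C (gi g) = ob (gdom g)" and cod_gi[simp]: "Cod C (gi g) = ob (gcod g)"
  using gok[of g] by (auto simp: hom_def)

definition semL :: "nat \<Rightarrow> gen \<Rightarrow> nat list \<Rightarrow> 'm" where
  "semL n g W = Tm C (Idm C (ob (take n W))) (Tm C (gi g) (Idm C (ob (drop (n + length (gdom g)) W))))"

fun semA :: "nat list \<Rightarrow> lay list \<Rightarrow> 'm" where
  "semA W [] = Idm C (ob W)"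
| "semA W ((n,g)#d) = Cmp C (semA (ap n g W) d) (semL n g W)"

fun interp :: "ex \<Rightarrow> 'm" where
  "interp (EG g) = gi g" | "interp (EI xs) = Idm C (ob xs)"
| "interp (EC e1 e2) = Cmp C (interp e1) (interp e2)"
| "interp (ET e1 e2) = Tm C (interp e1) (interp e2)"
| "interp (EBL xs y) = Br C (ob xs) (obj y)" | "interp (EBR y xs) = Br C (obj y) (ob xs)"
| "interp (EIL xs y) = Binv C (ob xs) (obj y)" | "interp (EIR y xs) = Binv C (obj y) (ob xs)"

definition valid :: "rule \<Rightarrow> bool" where
  "valid R = (case R of (X,l,r) \<Rightarrow> wt X l \<and> wt X r \<and> wires X l = wires X r \<and> semA X l = semA X r)"

lemma lay_split: "fits n dg W \<Longrightarrow> take n W @ dg @ drop (n + length dg) W = W"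
proof -
  assume a: "fits n dg W"
  have t: "take (length dg) (drop n W) = dg" using a by (simp add: fits_def)
  have e: "drop (length dg) (drop n W) = drop (n + length dg) W" by (simp add: add.commute)
  have "W = take n W @ drop n W" by (rule append_take_drop_id[symmetric])
  also have "drop n W = take (length dg) (drop n W) @ drop (length dg) (drop n W)"
    by (rule append_take_drop_id[symmetric])
  finally show ?thesis unfolding t e by simp
qed

lemma semL_dom: "fits n (gdom g) W \<Longrightarrow> Dom C (semL n g W) = ob W"
proof -
  assume a: "fits n (gdom g) W"
  have "Dom C (semL n g W) = ob (take n W @ gdom g @ drop (n + length (gdom g)) W)"
    by (simp add: semL_def)
  also have "\<dots> = ob W" using lay_split[OF a] by simp
  finally show ?thesis .
qed

lemma semL_cod: "Cod C (semL n g W) = ob (ap n g W)"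
  by (simp add: semL_def ap_def)

lemma semA_dom: "wt W d \<Longrightarrow> Dom C (semA W d) = ob W"
  and semA_cod: "wt W d \<Longrightarrow> Cod C (semA W d) = ob (wires W d)"
proof (induction W d rule: wt.induct)
  case (2 W n g d)
  { case 1 then show ?case using 2 by (simp add: semL_dom semL_cod) }
  { case 2 then show ?case using "2.IH" by (simp add: semL_dom semL_cod) }
qed simp_all


lemma wt_append[simp]: "wt W (d1 @ d2) = (wt W d1 \<and> wt (wires W d1) d2)"
  by (induction W d1 rule: wt.induct) auto
lemma wires_append[simp]: "wires W (d1 @ d2) = wires (wires W d1) d2"
  by (induction W d1 rule: wires.induct) auto

lemma semA_append: "wt W (d1 @ d2) \<Longrightarrow> semA W (d1 @ d2) = Cmp C (semA (wires W d1) d2) (semA W d1)"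
proof (induction W d1 rule: wt.induct)
  case (1 W)
  then show ?case by (simp add: semA_dom)
next
  case (2 W n g d)
  then have f: "fits n (gdom g) W" and w: "wt (ap n g W) (d @ d2)" by auto
  have "semA W (((n,g)#d) @ d2) = Cmp C (semA (ap n g W) (d @ d2)) (semL n g W)" by simp
  also have "\<dots> = Cmp C (Cmp C (semA (wires (ap n g W) d) d2) (semA (ap n g W) d)) (semL n g W)"
    using 2 w by simp
  also have "\<dots> = Cmp C (semA (wires (ap n g W) d) d2) (Cmp C (semA (ap n g W) d) (semL n g W))"
    using w by (intro cmp_assoc_r) (auto simp: semA_dom semA_cod semL_cod)
  finally show ?case by simp
qed

lemma take_app: "n \<le> length X \<Longrightarrow> take (length P + n) (P @ X @ Q) = P @ take n X"
  by simp
lemma drop_app: "n \<le> length X \<Longrightarrow> drop (length P + n) (P @ X @ Q) = drop n X @ Q"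
  by simp

lemma fits_shift: "fits n dg X \<Longrightarrow> fits (n + length P) dg (P @ X @ Q)"
  unfolding fits_def by (simp add: add.commute)

lemma ap_shift: "fits n (gdom g) X \<Longrightarrow> ap (n + length P) g (P @ X @ Q) = P @ ap n g X @ Q"
  unfolding fits_def ap_def by (simp add: add.commute add.left_commute)

lemma semL_shift: "fits n (gdom g) X \<Longrightarrow>
   semL (n + length P) g (P @ X @ Q) = Tm C (Idm C (ob P)) (Tm C (semL n g X) (Idm C (ob Q)))"
  unfolding fits_def semL_def by (simp add: add.commute add.left_commute idm_split)

lemma shift_cons[simp]: "shift p ((n,g)#l) = (n+p,g) # shift p l" and shift_nil[simp]: "shift p [] = []"
  by (simp_all add: shift_def)
lemma shift_append[simp]: "shift p (l1 @ l2) = shift p l1 @ shift p l2" by (simp add: shift_def)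
lemma shift_shift[simp]: "shift p (shift q l) = shift (q + p) l" by (induction l) (auto simp: shift_def)
lemma shift_0[simp]: "shift 0 l = l" by (induction l) (auto simp: shift_def)

lemma shift_lemma: "wt X l \<Longrightarrow> wt (P @ X @ Q) (shift (length P) l) \<and>
   wires (P @ X @ Q) (shift (length P) l) = P @ wires X l @ Q \<and>
   semA (P @ X @ Q) (shift (length P) l) = Tm C (Idm C (ob P)) (Tm C (semA X l) (Idm C (ob Q)))"
proof (induction X l rule: wt.induct)
  case (1 W)
  then show ?case by (simp add: idm_split)
next
  case (2 X n g l)
  then have f: "fits n (gdom g) X" and w: "wt (ap n g X) l" by auto
  note IH = "2.IH"[OF w]
  have a: "ap (n + length P) g (P @ X @ Q) = P @ ap n g X @ Q" using ap_shift[OF f] .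
  have "semA (P @ X @ Q) (shift (length P) ((n,g)#l)) =
      Cmp C (Tm C (Idm C (ob P)) (Tm C (semA (ap n g X) l) (Idm C (ob Q))))
            (Tm C (Idm C (ob P)) (Tm C (semL n g X) (Idm C (ob Q))))"
    using IH a semL_shift[OF f] by simp
  also have "\<dots> = Tm C (Idm C (ob P)) (Tm C (Cmp C (semA (ap n g X) l) (semL n g X)) (Idm C (ob Q)))"
    using w by (simp add: interchange_r semA_dom semL_cod)
  finally show ?case using IH a fits_shift[OF f] f by simp
qed

lemma shift_lemma0: "wt X l \<Longrightarrow> wt (X @ Q) l \<and> wires (X @ Q) l = wires X l @ Q \<and>
   semA (X @ Q) l = Tm C (semA X l) (Idm C (ob Q))"
  using shift_lemma[of X l "[]" Q] by simp

lemma swap_canon1: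
  assumes "gdom g1 = d1" "gdom g2 = d2"
  shows "wt (P @ d1 @ Z @ d2 @ Q) [(length P + length d1 + length Z, g2), (length P, g1)]
    \<and> wires (P @ d1 @ Z @ d2 @ Q) [(length P + length d1 + length Z, g2), (length P, g1)]
     = wires (P @ d1 @ Z @ d2 @ Q) [(length P, g1), (length P + length (gcod g1) + length Z, g2)]
    \<and> semA (P @ d1 @ Z @ d2 @ Q) [(length P + length d1 + length Z, g2), (length P, g1)]
     = semA (P @ d1 @ Z @ d2 @ Q) [(length P, g1), (length P + length (gcod g1) + length Z, g2)]"
  using assms by (simp add: semL_def ap_def fits_def interchange_r add.assoc idm_split)

lemma swap_canon2:
  assumes "gdom g1 = d1" "gdom g2 = d2"
  shows "wt (P @ d1 @ Z @ d2 @ Q) [(length P, g1), (length P + length (gcod g1) + length Z, g2)]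
    \<and> wires (P @ d1 @ Z @ d2 @ Q) [(length P, g1), (length P + length (gcod g1) + length Z, g2)]
     = wires (P @ d1 @ Z @ d2 @ Q) [(length P + length d1 + length Z, g2), (length P, g1)]
    \<and> semA (P @ d1 @ Z @ d2 @ Q) [(length P, g1), (length P + length (gcod g1) + length Z, g2)]
     = semA (P @ d1 @ Z @ d2 @ Q) [(length P + length d1 + length Z, g2), (length P, g1)]"
  using assms by (simp add: semL_def ap_def fits_def interchange_r add.assoc idm_split)

lemma decomp2:
  assumes "fits n1 d1 W" "fits n2 d2 (take n1 W @ c1 @ drop (n1 + length d1) W)" "n1 + length c1 \<le> n2"
  obtains P Z Q where "W = P @ d1 @ Z @ d2 @ Q" "length P = n1" "n2 = n1 + length c1 + length Z"
proof -
  define P where "P = take n1 W"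
  define R where "R = drop (n1 + length d1) W"
  have W: "W = P @ d1 @ R" using lay_split[OF assms(1)] by (simp add: P_def R_def)
  have lP: "length P = n1" using assms(1) by (simp add: P_def fits_def)
  define z where "z = n2 - n1 - length c1"
  have f2: "fits n2 d2 (P @ c1 @ R)" using assms(2) by (simp add: P_def R_def)
  have n2: "n2 = length P + length c1 + z" using assms(3) lP by (simp add: z_def)
  have fR: "fits z d2 R" using f2 unfolding n2 fits_def by (simp add: add.assoc)
  define Z where "Z = take z R"
  define Q where "Q = drop (z + length d2) R"
  have R: "R = Z @ d2 @ Q" using lay_split[OF fR] by (simp add: Z_def Q_def)
  have lZ: "length Z = z" using fR by (simp add: Z_def fits_def)
  show ?thesis by (rule that[of P Z Q]) (use W R lP lZ n2 in auto)
qed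

lemma tk: "n2 + k \<le> length P \<Longrightarrow> take k (drop n2 (P @ R)) = take k (drop n2 P)"
  by simp

lemma swap_sound:
  assumes s: "swp a b = Some (b', a')" and w: "wt W [a,b]"
  shows "wt W [b',a'] \<and> wires W [b',a'] = wires W [a,b] \<and> semA W [b',a'] = semA W [a,b]"
proof -
  obtain n1 g1 where a: "a = (n1,g1)" by (cases a)
  obtain n2 g2 where b: "b = (n2,g2)" by (cases b)
  show ?thesis
  proof (cases "n1 + length (gcod g1) \<le> n2")
    case True
    then have e: "b' = (n2 + length (gdom g1) - length (gcod g1), g2)" "a' = (n1, g1)"
      using s by (auto simp: a b)
    have f1: "fits n1 (gdom g1) W" and f2: "fits n2 (gdom g2) (take n1 W @ gcod g1 @ drop (n1 + length (gdom g1)) W)"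
      using w by (auto simp: a b ap_def)
    obtain P Z Q where W: "W = P @ gdom g1 @ Z @ gdom g2 @ Q" and lP: "length P = n1"
      and n2: "n2 = n1 + length (gcod g1) + length Z"
      by (rule decomp2[OF f1 f2 True])
    have p: "n2 + length (gdom g1) - length (gcod g1) = length P + length (gdom g1) + length Z"
      using n2 lP by simp
    have e1: "[a,b] = [(length P, g1), (length P + length (gcod g1) + length Z, g2)]" using a b lP n2 by simp
    have e2: "[b',a'] = [(length P + length (gdom g1) + length Z, g2), (length P, g1)]" using e p lP by simp
    show ?thesis unfolding e1 e2 W by (rule swap_canon1) auto
  next
    case False
    then have c2: "n2 + length (gdom g2) \<le> n1" using s by (auto simp: a b split: if_splits)
    then have e: "b' = (n2, g2)" "a' = (n1 + length (gcod g2) - length (gdom g2), g1)"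
      using s False by (auto simp: a b)
    have f1: "fits n1 (gdom g1) W" and f2: "fits n2 (gdom g2) (ap n1 g1 W)"
      using w by (auto simp: a b)
    define P where "P = take n2 W"
    define R where "R = drop (n2 + length (gdom g2)) W"
    have L: "length (take n1 W) = n1" using f1 by (simp add: fits_def)
    have t1: "take (length (gdom g2)) (drop n2 (ap n1 g1 W)) = take (length (gdom g2)) (drop n2 (take n1 W))"
      unfolding ap_def using tk[of n2 "length (gdom g2)" "take n1 W"] L c2 by simp
    have t2: "take (length (gdom g2)) (drop n2 (take n1 W)) = take (length (gdom g2)) (drop n2 W)"
      using c2 by (simp add: drop_take take_take min_def)
    have fW: "fits n2 (gdom g2) W" using f1 f2 c2 t1 t2 unfolding fits_def by simp
    have W: "W = P @ gdom g2 @ R" using lay_split[OF fW] by (simp add: P_def R_def)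
    have lP: "length P = n2" using fW by (simp add: P_def fits_def)
    define z where "z = n1 - n2 - length (gdom g2)"
    have n1: "n1 = length P + length (gdom g2) + z" using c2 lP by (simp add: z_def)
    have fR: "fits z (gdom g1) R" using f1 unfolding W n1 fits_def by (simp add: add.assoc)
    define Z where "Z = take z R"
    define Q where "Q = drop (z + length (gdom g1)) R"
    have R: "R = Z @ gdom g1 @ Q" using lay_split[OF fR] by (simp add: Z_def Q_def)
    have lZ: "length Z = z" using fR by (simp add: Z_def fits_def)
    have p: "n1 + length (gcod g2) - length (gdom g2) = length P + length (gcod g2) + length Z"
      using n1 lZ by simp
    have p2: "n1 = length P + length (gdom g2) + length Z" using n1 lZ by simp
    have e1: "[a,b] = [(length P + length (gdom g2) + length Z, g1), (length P, g2)]" using a b lP p2 by simp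
    have e2: "[b',a'] = [(length P, g2), (length P + length (gcod g2) + length Z, g1)]" using e p lP by simp
    show ?thesis unfolding e1 e2 W R by (rule swap_canon2) auto
  qed
qed


lemma swap_at_sound: "swap_at i d = Some d' \<Longrightarrow> wt W d \<Longrightarrow>
    wt W d' \<and> wires W d' = wires W d \<and> semA W d' = semA W d"
proof (induction i d arbitrary: W d' rule: swap_at.induct)
  case (1 a b d)
  then obtain a' b' where s: "swp a b = Some (b',a')" and d': "d' = b' # a' # d"
    by (auto split: option.splits)
  have w: "wt W ([a,b] @ d)" using 1 by simp
  note ss = swap_sound[OF s, of W]
  have w1: "wt W [a,b]" using w unfolding wt_append by blast
  have e1: "wires W [b',a'] = wires W [a,b]" and e2: "semA W [b',a'] = semA W [a,b]" and w3: "wt W [b',a']"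
    using ss w1 by auto
  have w2: "wt W ([b',a'] @ d)" using w unfolding wt_append e1 using w3 by blast
  have "semA W ([b',a'] @ d) = semA W ([a,b] @ d)"
    unfolding semA_append[OF w] semA_append[OF w2] e1 e2 ..
  moreover have "wires W ([b',a'] @ d) = wires W ([a,b] @ d)" unfolding wires_append e1 ..
  ultimately show ?case using d' w2 by simp
next
  case (2 i a d)
  then obtain e where e: "swap_at i d = Some e" and d': "d' = a # e" by auto
  obtain n g where a: "a = (n,g)" by (cases a)
  have "wt (ap n g W) d" using 2 a by simp
  then show ?case using "2.IH"[OF e] 2 a d' by simp
qed auto

lemma rw_sound: "rw_at i p R W d = Some d' \<Longrightarrow> valid R \<Longrightarrow> wt W d \<Longrightarrow>
    wt W d' \<and> wires W d' = wires W d \<and> semA W d' = semA W d"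
proof (induction i p R W d arbitrary: d' rule: rw_at.induct)
  case (1 p X l r W d)
  then have f: "fits p X W" and t: "take (length l) d = shift p l"
    and d': "d' = shift p r @ drop (length l) d" by (auto split: if_splits)
  have v: "wt X l" "wt X r" "wires X l = wires X r" "semA X l = semA X r"
    using 1 by (auto simp: valid_def)
  define P where "P = take p W"
  define Q where "Q = drop (p + length X) W"
  have W: "W = P @ X @ Q" using lay_split[OF f] by (simp add: P_def Q_def)
  have lP: "length P = p" using f by (simp add: P_def fits_def)
  have d: "d = shift p l @ drop (length l) d" using t by (metis append_take_drop_id)
  note sl = shift_lemma[OF v(1), of P Q] and sr = shift_lemma[OF v(2), of P Q]
  have wd: "wt W (shift p l @ drop (length l) d)" using 1 d by simp
  have wd': "wt W (shift p r @ drop (length l) d)"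
    using wd sl sr v unfolding W lP[symmetric] by simp
  have "semA W (shift p r @ drop (length l) d) = semA W (shift p l @ drop (length l) d)"
    using semA_append[OF wd] semA_append[OF wd'] sl sr v unfolding W lP[symmetric] by simp
  then show ?case using d' wd' wd d sl sr v unfolding W lP[symmetric] by (metis wires_append)
next
  case (2 i p R W a d)
  then obtain e where e: "rw_at i p R (ap (fst a) (snd a) W) d = Some e" and d': "d' = a # e" by auto
  obtain n g where a: "a = (n,g)" by (cases a)
  have "wt (ap n g W) d" using 2 a by simp
  then show ?case using "2.IH"[OF e] 2 a d' by simp
qed auto

lemma valid_rrev: "valid R \<Longrightarrow> valid (rrev R)"
  by (cases R) (auto simp: valid_def)

lemma run_sound: "run W ops d = Some d' \<Longrightarrow> list_all valid (oprules ops) \<Longrightarrow> wt W d \<Longrightarrow>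
    wt W d' \<and> wires W d' = wires W d \<and> semA W d' = semA W d"
proof (induction W ops d rule: run.induct)
  case (1 W d)
  then show ?case by simp
next
  case (2 W i os d)
  then obtain e where e: "swap_at i d = Some e" and r: "run W os e = Some d'" by (auto split: option.splits)
  show ?case using swap_at_sound[OF e] "2.IH"[OF e r] 2 by simp
next
  case (3 W i p R os d)
  then obtain e where e: "rw_at i p R W d = Some e" and r: "run W os e = Some d'" by (auto split: option.splits)
  show ?case using rw_sound[OF e] "3.IH"[OF e r] 3 by simp
next
  case (4 W i p R os d)
  then obtain e where e: "rw_at i p (rrev R) W d = Some e" and r: "run W os e = Some d'" by (auto split: option.splits)
  show ?case using rw_sound[OF e] valid_rrev "4.IH"[OF e r] 4 by simp
qed

lemma ob1[simp]: "ob [y] = obj y" by simp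

lemma brL_sem: "wt (xs @ [y]) (brL xs y) \<and> wires (xs @ [y]) (brL xs y) = y # xs \<and>
   semA (xs @ [y]) (brL xs y) = Br C (ob xs) (obj y)"
proof (induction xs)
  case Nil
  then show ?case by (simp add: br_unit_l)
next
  case (Cons x xs)
  note s = shift_lemma[of "xs @ [y]" "brL xs y" "[x]" "[]", simplified, OF Cons[THEN conjunct1]]
  have w: "wt (x # xs @ [y]) (shift 1 (brL xs y) @ [(0, Gb x y)])"
    using s Cons by (simp add: fits_def ap_def)
  have "semA (x # xs @ [y]) (shift 1 (brL xs y) @ [(0, Gb x y)]) =
     Cmp C (Tm C (Br C (obj x) (obj y)) (Idm C (ob xs))) (Tm C (Idm C (obj x)) (Br C (ob xs) (obj y)))"
    using semA_append[OF w] s Cons by (simp add: semL_def ap_def gi_b)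
  also have "\<dots> = Br C (ob (x # xs)) (obj y)" by (simp add: hex2)
  finally show ?case using w s Cons by (simp add: ap_def)
qed

lemma brR_sem: "wt (y # xs) (brR y xs) \<and> wires (y # xs) (brR y xs) = xs @ [y] \<and>
   semA (y # xs) (brR y xs) = Br C (obj y) (ob xs)"
proof (induction xs)
  case Nil
  then show ?case by (simp add: br_unit_r)
next
  case (Cons x xs)
  note s = shift_lemma[of "y # xs" "brR y xs" "[x]" "[]", simplified, OF Cons[THEN conjunct1]]
  have "semA (y # x # xs) (brR y (x # xs)) =
     Cmp C (Tm C (Idm C (obj x)) (Br C (obj y) (ob xs))) (Tm C (Br C (obj y) (obj x)) (Idm C (ob xs)))"
    using s Cons by (simp add: semL_def ap_def gi_b)
  also have "\<dots> = Br C (obj y) (ob (x # xs))" by (simp add: hex1)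
  finally show ?case using s Cons by (simp add: ap_def fits_def)
qed

lemma biL_sem: "wt (xs @ [y]) (biL xs y) \<and> wires (xs @ [y]) (biL xs y) = y # xs \<and>
   semA (xs @ [y]) (biL xs y) = Binv C (ob xs) (obj y)"
proof (induction xs)
  case Nil
  then show ?case by (simp add: Binv_def br_unit_r inv_id)
next
  case (Cons x xs)
  note s = shift_lemma[of "xs @ [y]" "biL xs y" "[x]" "[]", simplified, OF Cons[THEN conjunct1]]
  have w: "wt (x # xs @ [y]) (shift 1 (biL xs y) @ [(0, Gbi x y)])"
    using s Cons by (simp add: fits_def ap_def)
  have "semA (x # xs @ [y]) (shift 1 (biL xs y) @ [(0, Gbi x y)]) =
     Cmp C (Tm C (Binv C (obj x) (obj y)) (Idm C (ob xs))) (Tm C (Idm C (obj x)) (Binv C (ob xs) (obj y)))"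
    using semA_append[OF w] s Cons by (simp add: semL_def ap_def gi_bi)
  also have "\<dots> = Binv C (ob (x # xs)) (obj y)"
  proof -
    have "Br C (obj y) (ob (x # xs)) = Cmp C (Tm C (Idm C (obj x)) (Br C (obj y) (ob xs))) (Tm C (Br C (obj y) (obj x)) (Idm C (ob xs)))"
      by (simp add: hex1)
    moreover note i1 = inv_tm[OF iso_id br_iso, of "obj x" "obj y" "ob xs"]
      and i2 = inv_tm[OF br_iso iso_id, of "obj y" "obj x" "ob xs"]
    ultimately show ?thesis
      using inv_cmp[OF i2[THEN conjunct1] i1[THEN conjunct1]] i1 i2
      by (simp add: Binv_def inv_id)
  qed
  finally show ?case using w s Cons by (simp add: ap_def)
qed

lemma biR_sem: "wt (y # xs) (biR y xs) \<and> wires (y # xs) (biR y xs) = xs @ [y] \<and>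
   semA (y # xs) (biR y xs) = Binv C (obj y) (ob xs)"
proof (induction xs)
  case Nil
  then show ?case by (simp add: Binv_def br_unit_l inv_id)
next
  case (Cons x xs)
  note s = shift_lemma[of "y # xs" "biR y xs" "[x]" "[]", simplified, OF Cons[THEN conjunct1]]
  have "semA (y # x # xs) (biR y (x # xs)) =
     Cmp C (Tm C (Idm C (obj x)) (Binv C (obj y) (ob xs))) (Tm C (Binv C (obj y) (obj x)) (Idm C (ob xs)))"
    using s Cons by (simp add: semL_def ap_def gi_bi)
  also have "\<dots> = Binv C (obj y) (ob (x # xs))"
  proof -
    have "Br C (ob (x # xs)) (obj y) = Cmp C (Tm C (Br C (obj x) (obj y)) (Idm C (ob xs))) (Tm C (Idm C (obj x)) (Br C (ob xs) (obj y)))"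
      by (simp add: hex2)
    moreover note i1 = inv_tm[OF iso_id br_iso, of "obj x" "ob xs" "obj y"]
      and i2 = inv_tm[OF br_iso iso_id, of "obj x" "obj y" "ob xs"]
    ultimately show ?thesis
      using inv_cmp[OF i1[THEN conjunct1] i2[THEN conjunct1]] i1 i2
      by (simp add: Binv_def inv_id)
  qed
  finally show ?case using s Cons by (simp add: ap_def fits_def)
qed

lemma cmpl_sound: "ewt e \<Longrightarrow> wt (edom e) (cmpl e) \<and> wires (edom e) (cmpl e) = ecod e \<and>
    semA (edom e) (cmpl e) = interp e"
proof (induction e)
  case (EG g)
  then show ?case using gok[of g] by (simp add: fits_def ap_def semL_def hom_def)
next
  case (EI xs)
  then show ?case by simp
next
  case (EC e1 e2)
  then have w: "wt (edom e2) (cmpl e2 @ cmpl e1)" by simp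
  show ?case using EC semA_append[OF w] by simp
next
  case (ET e1 e2)
  then have i1: "wt (edom e1) (cmpl e1)" "wires (edom e1) (cmpl e1) = ecod e1" "semA (edom e1) (cmpl e1) = interp e1"
    and i2: "wt (edom e2) (cmpl e2)" "wires (edom e2) (cmpl e2) = ecod e2" "semA (edom e2) (cmpl e2) = interp e2"
    by auto
  note s1 = shift_lemma0[OF i1(1), of "edom e2"]
  note s2 = shift_lemma[OF i2(1), of "ecod e1" "[]"]
  have w: "wt (edom e1 @ edom e2) (cmpl e1 @ shift (length (ecod e1)) (cmpl e2))"
    using s1 s2 i1 by simp
  have "semA (edom e1 @ edom e2) (cmpl e1 @ shift (length (ecod e1)) (cmpl e2))
     = Cmp C (Tm C (Idm C (ob (ecod e1))) (interp e2)) (Tm C (interp e1) (Idm C (ob (edom e2))))"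
    using semA_append[OF w] s1 s2 i1 i2 by simp
  also have "\<dots> = Tm C (interp e1) (interp e2)"
    using i1 i2 by (simp add: interchange_r semA_dom semA_cod flip: i1(3) i2(3))
  finally show ?case using s1 s2 i1 i2 by simp
qed (use brL_sem brR_sem biL_sem biR_sem in auto)

lemma valid_mkrule: "ewt e1 \<Longrightarrow> ewt e2 \<Longrightarrow> edom e1 = edom e2 \<Longrightarrow> ecod e1 = ecod e2 \<Longrightarrow>
   interp e1 = interp e2 \<Longrightarrow> valid (mkrule e1 e2)"
  using cmpl_sound[of e1] cmpl_sound[of e2] by (simp add: mkrule_def valid_def)

lemma valid_run: "wt X l \<Longrightarrow> run X ops l = Some r \<Longrightarrow> list_all valid (oprules ops) \<Longrightarrow> valid (X, l, r)"
  using run_sound[of X ops l r] by (auto simp: valid_def)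

lemma eq_run: "ewt e1 \<Longrightarrow> ewt e2 \<Longrightarrow> edom e1 = edom e2 \<Longrightarrow> run (edom e1) ops (cmpl e1) = Some (cmpl e2)
   \<Longrightarrow> list_all valid (oprules ops) \<Longrightarrow> interp e1 = interp e2"
  using run_sound[of "edom e1" ops "cmpl e1" "cmpl e2"] cmpl_sound[of e1] cmpl_sound[of e2] by simp


lemma valid_interp: "valid (X, l, r) \<Longrightarrow> ewt e1 \<Longrightarrow> ewt e2 \<Longrightarrow> edom e1 = X \<Longrightarrow> edom e2 = X \<Longrightarrow>
   cmpl e1 = l \<Longrightarrow> cmpl e2 = r \<Longrightarrow> interp e1 = interp e2"
  using cmpl_sound[of e1] cmpl_sound[of e2] by (auto simp: valid_def)
lemma semA_single: "fits n (gdom g) W \<Longrightarrow> semA W [(n,g)] = semL n g W"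
  by (simp add: semL_cod)

lemma valid_natBL: "valid (natBL g y)"
proof -
  let ?X = "gdom g @ [y]"
  note bc = brL_sem[of "gcod g" y] and bd = brL_sem[of "gdom g" y]
  have a0: "ap 0 g ?X = gcod g @ [y]" by (simp add: ap_def)
  have f0: "fits 0 (gdom g) ?X" by (simp add: fits_def)
  have f1: "fits 1 (gdom g) (y # gdom g)" by (simp add: fits_def)
  have a1: "ap 1 g (y # gdom g) = y # gcod g" by (simp add: ap_def)
  have wl: "wt ?X ((0,g) # brL (gcod g) y)" using f0 a0 bc by simp
  have wr: "wt ?X (brL (gdom g) y @ [(1,g)])" using bd f1 by simp
  have sl: "semA ?X ((0,g) # brL (gcod g) y) = Cmp C (Br C (ob (gcod g)) (obj y)) (Tm C (gi g) (Idm C (obj y)))"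
    using bc a0 by (simp add: semL_def)
  have sr: "semA ?X (brL (gdom g) y @ [(1,g)]) = Cmp C (Tm C (Idm C (obj y)) (gi g)) (Br C (ob (gdom g)) (obj y))"
    using semA_append[OF wr] bd f1 by (simp add: semL_def ap_def)
  have "Cmp C (Br C (ob (gcod g)) (obj y)) (Tm C (gi g) (Idm C (obj y))) = Cmp C (Tm C (Idm C (obj y)) (gi g)) (Br C (ob (gdom g)) (obj y))"
    using br_nat[of "gi g" "Idm C (obj y)"] by simp
  then show ?thesis unfolding natBL_def valid_def using wl wr sl sr bc bd a0 a1 by simp
qed

lemma valid_natBR: "valid (natBR y g)"
proof -
  let ?X = "y # gdom g"
  note bc = brR_sem[of y "gcod g"] and bd = brR_sem[of y "gdom g"]
  have a0: "ap 1 g ?X = y # gcod g" by (simp add: ap_def)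
  have f0: "fits 1 (gdom g) ?X" by (simp add: fits_def)
  have f1: "fits 0 (gdom g) (gdom g @ [y])" by (simp add: fits_def)
  have a1: "ap 0 g (gdom g @ [y]) = gcod g @ [y]" by (simp add: ap_def)
  have wl: "wt ?X ((1,g) # brR y (gcod g))" using f0 a0 bc by simp
  have wr: "wt ?X (brR y (gdom g) @ [(0,g)])" using bd f1 by simp
  have sl: "semA ?X ((1,g) # brR y (gcod g)) = Cmp C (Br C (obj y) (ob (gcod g))) (Tm C (Idm C (obj y)) (gi g))"
    using bc a0 by (simp add: semL_def)
  have sr: "semA ?X (brR y (gdom g) @ [(0,g)]) = Cmp C (Tm C (gi g) (Idm C (obj y))) (Br C (obj y) (ob (gdom g)))"
    using semA_append[OF wr] bd f1 by (simp add: semL_def ap_def)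
  have "Cmp C (Br C (obj y) (ob (gcod g))) (Tm C (Idm C (obj y)) (gi g)) = Cmp C (Tm C (gi g) (Idm C (obj y))) (Br C (obj y) (ob (gdom g)))"
    using br_nat[of "Idm C (obj y)" "gi g"] by simp
  then show ?thesis unfolding natBR_def valid_def using wl wr sl sr bc bd a0 a1 by simp
qed

lemma valid_natIL: "valid (natIL g y)"
proof -
  let ?X = "gdom g @ [y]"
  note bc = biL_sem[of "gcod g" y] and bd = biL_sem[of "gdom g" y]
  have a0: "ap 0 g ?X = gcod g @ [y]" by (simp add: ap_def)
  have f0: "fits 0 (gdom g) ?X" by (simp add: fits_def)
  have f1: "fits 1 (gdom g) (y # gdom g)" by (simp add: fits_def)
  have a1: "ap 1 g (y # gdom g) = y # gcod g" by (simp add: ap_def)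
  have wl: "wt ?X ((0,g) # biL (gcod g) y)" using f0 a0 bc by simp
  have wr: "wt ?X (biL (gdom g) y @ [(1,g)])" using bd f1 by simp
  have sl: "semA ?X ((0,g) # biL (gcod g) y) = Cmp C (Binv C (ob (gcod g)) (obj y)) (Tm C (gi g) (Idm C (obj y)))"
    using bc a0 by (simp add: semL_def)
  have sr: "semA ?X (biL (gdom g) y @ [(1,g)]) = Cmp C (Tm C (Idm C (obj y)) (gi g)) (Binv C (ob (gdom g)) (obj y))"
    using semA_append[OF wr] bd f1 by (simp add: semL_def ap_def)
  have "Cmp C (Tm C (Idm C (obj y)) (gi g)) (inv C (Br C (obj y) (ob (gdom g)))) = Cmp C (inv C (Br C (obj y) (ob (gcod g)))) (Tm C (gi g) (Idm C (obj y)))"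
    by (rule inv_nat[OF br_iso br_iso]) (use br_nat[of "Idm C (obj y)" "gi g"] in simp_all)
  then show ?thesis unfolding natIL_def valid_def using wl wr sl sr bc bd a0 a1 by (simp add: Binv_def)
qed

lemma valid_natIR: "valid (natIR y g)"
proof -
  let ?X = "y # gdom g"
  note bc = biR_sem[of y "gcod g"] and bd = biR_sem[of y "gdom g"]
  have a0: "ap 1 g ?X = y # gcod g" by (simp add: ap_def)
  have f0: "fits 1 (gdom g) ?X" by (simp add: fits_def)
  have f1: "fits 0 (gdom g) (gdom g @ [y])" by (simp add: fits_def)
  have a1: "ap 0 g (gdom g @ [y]) = gcod g @ [y]" by (simp add: ap_def)
  have wl: "wt ?X ((1,g) # biR y (gcod g))" using f0 a0 bc by simp
  have wr: "wt ?X (biR y (gdom g) @ [(0,g)])" using bd f1 by simp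
  have sl: "semA ?X ((1,g) # biR y (gcod g)) = Cmp C (Binv C (obj y) (ob (gcod g))) (Tm C (Idm C (obj y)) (gi g))"
    using bc a0 by (simp add: semL_def)
  have sr: "semA ?X (biR y (gdom g) @ [(0,g)]) = Cmp C (Tm C (gi g) (Idm C (obj y))) (Binv C (obj y) (ob (gdom g)))"
    using semA_append[OF wr] bd f1 by (simp add: semL_def ap_def)
  have "Cmp C (Tm C (gi g) (Idm C (obj y))) (inv C (Br C (ob (gdom g)) (obj y))) = Cmp C (inv C (Br C (ob (gcod g)) (obj y))) (Tm C (Idm C (obj y)) (gi g))"
    by (rule inv_nat[OF br_iso br_iso]) (use br_nat[of "gi g" "Idm C (obj y)"] in simp_all)
  then show ?thesis unfolding natIR_def valid_def using wl wr sl sr bc bd a0 a1 by (simp add: Binv_def)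
qed

lemma valid_cancBI: "valid (cancBI x y)"
  using inv_props(3)[OF br_iso[of "obj y" "obj x"]]
  by (simp add: cancBI_def valid_def fits_def ap_def semL_def gi_b gi_bi Binv_def)

lemma valid_cancIB: "valid (cancIB x y)"
  using inv_props(2)[OF br_iso[of "obj y" "obj x"]]
  by (simp add: cancIB_def valid_def fits_def ap_def semL_def gi_b gi_bi Binv_def iso_hom_inv[OF br_iso])

end

locale hctx = bmc C for C :: "('o,'m) bcat" +
  fixes H A :: 'o and m u \<Delta> \<epsilon> S aA :: 'm
  assumes hopf: "hopf_algebra C H m u \<Delta> \<epsilon> S"
    and isoS: "iso C S"
    and hmod: "hmodule C H m u A aA"
begin

lemma hopf_ax: "hom C m (Tob C H H) H" "hom C u (Uob C) H" "hom C \<Delta> H (Tob C H H)" "hom C \<epsilon> H (Uob C)"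
    "hom C S H H"
    "Cmp C m (Tm C m (Idm C H)) = Cmp C m (Tm C (Idm C H) m)"
    "Cmp C m (Tm C u (Idm C H)) = Idm C H" "Cmp C m (Tm C (Idm C H) u) = Idm C H"
    "Cmp C (Tm C \<Delta> (Idm C H)) \<Delta> = Cmp C (Tm C (Idm C H) \<Delta>) \<Delta>"
    "Cmp C (Tm C \<epsilon> (Idm C H)) \<Delta> = Idm C H" "Cmp C (Tm C (Idm C H) \<epsilon>) \<Delta> = Idm C H"
    "Cmp C \<Delta> m = chain C [Tm C m m, Tm C (Tm C (Idm C H) (Br C H H)) (Idm C H), Tm C \<Delta> \<Delta>]"
    "Cmp C \<Delta> u = Tm C u u"
    "Cmp C \<epsilon> m = Tm C \<epsilon> \<epsilon>"
    "Cmp C \<epsilon> u = Idm C (Uob C)"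
    "chain C [m, Tm C S (Idm C H), \<Delta>] = Cmp C u \<epsilon>"
    "chain C [m, Tm C (Idm C H) S, \<Delta>] = Cmp C u \<epsilon>"
  using hopf unfolding hopf_algebra_def Let_def by blast+

lemma mod_ax: "hom C aA (Tob C H A) A"
    "Cmp C aA (Tm C m (Idm C A)) = Cmp C aA (Tm C (Idm C H) aA)"
    "Cmp C aA (Tm C u (Idm C A)) = Idm C A"
  using hmod unfolding hmodule_def by blast+

lemma hty[simp]: "Dom C m = Tob C H H" "Cod C m = H" "Dom C u = Uob C" "Cod C u = H"
  "Dom C \<Delta> = H" "Cod C \<Delta> = Tob C H H" "Dom C \<epsilon> = H" "Cod C \<epsilon> = Uob C" "Dom C S = H" "Cod C S = H"
  "Dom C aA = Tob C H A" "Cod C aA = A"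
  using hopf_ax(1-5) mod_ax(1) by (auto simp: hom_def)

lemma Si_ty[simp]: "Dom C (inv C S) = H" "Cod C (inv C S) = H"
  using iso_hom_inv[OF isoS] by simp_all

definition objc :: "nat \<Rightarrow> 'o" where "objc n = (if n = 0 then H else A)"

lemma objc_simps[simp]: "objc 0 = H" "objc (Suc n) = A" by (simp_all add: objc_def)

definition phiI :: 'm where "phiI = Cmp C (Br C A H) (Tm C (Idm C A) S)"

fun gic :: "gen \<Rightarrow> 'm" where
  "gic Gm = m" | "gic Gu = u" | "gic GD = \<Delta>" | "gic Ge = \<epsilon>" | "gic GS = S" | "gic GSi = inv C S"
| "gic Ga = aA" | "gic (Gb x y) = Br C (objc x) (objc y)" | "gic (Gbi x y) = Binv C (objc x) (objc y)"
| "gic GaR = R_act C H m \<Delta> S A aA" | "gic GaS = smash_act C H m \<Delta> S A aA"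
| "gic GdS = smash_coact C H \<Delta> S A" | "gic GP = phi C H S A" | "gic GPi = phiI"

lemma gok_c: "hom C (gic g) (obs C objc (gdom g)) (obs C objc (gcod g))"
  by (cases g) (simp_all add: hom_def R_act_def smash_act_def smash_coact_def phi_def phiI_def
      tens_act_def Let_def)

end

sublocale hctx \<subseteq> eng C objc gic
  by unfold_locales (simp_all add: gok_c)




definition "r_mass = mkrule (EC (EG Gm) (ET (EG Gm) (EI [0]))) (EC (EG Gm) (ET (EI [0]) (EG Gm)))"

definition "r_mul = mkrule (EC (EG Gm) (ET (EG Gu) (EI [0]))) (EI [0])"

definition "r_mur = mkrule (EC (EG Gm) (ET (EI [0]) (EG Gu))) (EI [0])"

definition "r_coass = mkrule (EC (ET (EG GD) (EI [0])) (EG GD)) (EC (ET (EI [0]) (EG GD)) (EG GD))"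

definition "r_cul = mkrule (EC (ET (EG Ge) (EI [0])) (EG GD)) (EI [0])"

definition "r_cur = mkrule (EC (ET (EI [0]) (EG Ge)) (EG GD)) (EI [0])"

definition "r_bi = mkrule (EC (EG GD) (EG Gm)) (EC (ET (EG Gm) (EG Gm)) (EC (ET (EI [0]) (ET (EG (Gb 0 0)) (EI [0]))) (ET (EG GD) (EG GD))))"

definition "r_Du = mkrule (EC (EG GD) (EG Gu)) (ET (EG Gu) (EG Gu))"

definition "r_em = mkrule (EC (EG Ge) (EG Gm)) (ET (EG Ge) (EG Ge))"

definition "r_eu = mkrule (EC (EG Ge) (EG Gu)) (EI [])"

definition "r_antL = mkrule (EC (EG Gm) (EC (ET (EG GS) (EI [0])) (EG GD))) (EC (EG Gu) (EG Ge))"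

definition "r_antR = mkrule (EC (EG Gm) (EC (ET (EI [0]) (EG GS)) (EG GD))) (EC (EG Gu) (EG Ge))"

definition "r_SSi = mkrule (EC (EG GS) (EG GSi)) (EI [0])"

definition "r_SiS = mkrule (EC (EG GSi) (EG GS)) (EI [0])"

definition "r_amod = mkrule (EC (EG Ga) (ET (EG Gm) (EI [1]))) (EC (EG Ga) (ET (EI [0]) (EG Ga)))"

definition "r_aun = mkrule (EC (EG Ga) (ET (EG Gu) (EI [1]))) (EI [1])"

definition "r_aR = mkrule (EG GaR) (EC (ET (EG Gm) (EI [1])) (EC (ET (EI [0]) (EG (Gb 1 0))) (EC (ET (ET (EI [0]) (EG Ga)) (EG GS)) (EC (ET (EI [0,0]) (EG (Gb 0 1))) (EC (ET (ET (EG Gm) (EG GD)) (EI [1])) (EC (ET (ET (EI [0]) (EG (Gb 0 0))) (EI [1])) (ET (EG GD) (EI [0,1]))))))))"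

definition "r_aS = mkrule (EG GaS) (EC (ET (EI [1]) (EG Gm)) (EC (EIR 0 [1,0]) (EC (ET (EG GSi) (EC (ET (EG Ga) (EG Gm)) (EC (ET (EI [0]) (ET (EG (Gb 0 1)) (EI [0]))) (ET (EG GD) (EI [1,0]))))) (ET (EG GD) (EI [1,0])))))"

definition "r_dS = mkrule (EG GdS) (EC (ET (EG GS) (EI [1,0])) (EC (EBL [1,0] 0) (ET (EI [1]) (EG GD))))"

definition "r_P = mkrule (EG GP) (EC (EG (Gbi 0 1)) (ET (EG GSi) (EI [1])))"

definition "r_Pi = mkrule (EG GPi) (EC (EG (Gb 1 0)) (ET (EI [1]) (EG GS)))"

definition "r_Su = ([], [(0,Gu), (0,GS)], [(0,Gu)])"

definition "r_eS = ([0], [(0,GS), (0,Ge)], [(0,Ge)])"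

definition "r_C3 = ([0,0], [(0,GD), (2,GD), (1,(Gb 0 0)), (0,GD), (2,GD), (1,(Gb 0 0))], [(0,GD), (2,GD), (1,(Gb 0 0)), (2,GD), (4,GD), (3,(Gb 0 0))])"

definition "r_C1 = ([0,0], [(0,GD), (2,GD), (1,(Gb 0 0)), (0,Gm), (0,GS), (1,Gm), (0,Gm)], [(0,Ge), (0,Ge), (0,Gu)])"

definition "r_C2 = ([0,0], [(0,GD), (2,GD), (1,(Gb 0 0)), (0,Gm), (1,GS), (2,GS), (1,(Gb 0 0)), (1,Gm), (0,Gm)], [(0,Ge), (0,Ge), (0,Gu)])"

definition "r_Sm = ([0,0], [(0,Gm), (0,GS)], [(0,GS), (1,GS), (0,(Gb 0 0)), (0,Gm)])"

definition "r_C3b = ([0,0,0,0,0,0], [(1,(Gb 0 0)), (0,Gm), (1,Gm), (1,(Gb 0 0)), (0,Gm), (1,Gm)], [(3,(Gb 0 0)), (2,Gm), (3,Gm), (1,(Gb 0 0)), (0,Gm), (1,Gm)])"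

definition "r_C1b = ([0], [(0,GD), (0,GD), (2,GS), (2,GD), (1,(Gb 0 0)), (0,Gm), (1,Gm)], [(0,Ge), (0,Gu), (1,Gu)])"

definition "r_C2b = ([0], [(0,GD), (0,GD), (0,(Gb 0 0)), (0,GS), (1,GS), (2,GD), (1,(Gb 0 0)), (0,Gm), (1,Gm)], [(0,Ge), (0,Gu), (1,Gu)])"

definition "r_DS = ([0], [(0,GS), (0,GD)], [(0,GD), (0,(Gb 0 0)), (0,GS), (1,GS)])"

definition "r_Sim = ([0,0], [(0,Gm), (0,GSi)], [(0,GSi), (1,GSi), (0,(Gbi 0 0)), (0,Gm)])"

definition "r_DSi = ([0], [(0,GSi), (0,GD)], [(0,GD), (0,GSi), (1,GSi), (0,(Gbi 0 0))])"

definition "r_Siu = ([], [(0,Gu), (0,GSi)], [(0,Gu)])"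

definition "r_eSi = ([0], [(0,GSi), (0,Ge)], [(0,Ge)])"

definition "r_T2 = ([1,0], [(0,GPi), (0,GD), (1,GP)], [(0,GdS)])"

definition "r_PPi = ([1,0], [(0,GPi), (0,GP)], [])"

definition "r_PiP = ([0,1], [(0,GP), (0,GPi)], [])"

definition "r_T1p = ([0,0,1], [(1,GP), (0,GaS)], [(0,GaR), (0,GP)])"

definition "r_R1 = ([0,0,0,1], [(0,Gm), (0,GaR)], [(1,GaR), (0,GaR)])"

definition "r_R2 = ([0,1], [(0,Gu), (0,GaR)], [])"

definition "r_K = ([0,0,1], [(0,GaR), (0,GD)], [(0,GD), (1,(Gb 0 0)), (2,(Gb 0 1)), (0,GD), (2,GD), (1,(Gb 0 0)), (0,Gm), (1,GaR), (3,GS), (2,(Gb 1 0)), (1,(Gb 0 0)), (0,Gm)])"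

definition "r_R4 = ([0,0,1], [(0,GD), (2,GD), (1,(Gb 0 0)), (0,Gm), (1,GaR)], [(0,GD), (1,(Gb 0 0)), (2,(Gb 0 1)), (0,GaR), (0,GD), (2,(Gb 1 0)), (1,(Gb 0 0)), (0,Gm)])"

definition "r_T1 = ([0,1,0], [(0,GaS)], [(1,GPi), (0,GaR), (0,GP)])"

definition "r_S1 = ([0,0,1,0], [(0,Gm), (0,GaS)], [(1,GaS), (0,GaS)])"

definition "r_S2 = ([1,0], [(0,Gu), (0,GaS)], [])"

definition "r_S3 = ([1,0], [(0,GdS), (0,GD)], [(0,GdS), (1,GdS)])"

definition "r_S4 = ([1,0], [(0,GdS), (0,Ge)], [])"

definition "r_S5 = ([0,1,0], [(0,GD), (2,GdS), (1,(Gb 0 0)), (0,Gm), (1,GaS)], [(0,GD), (1,(Gb 0 1)), (2,(Gb 0 0)), (0,GaS), (0,GdS), (2,(Gb 0 0)), (1,(Gb 1 0)), (0,Gm)])"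

definition "r_M2 = ([0,1], [(0,GP), (0,GdS)], [(0,GD), (1,GP)])"

lemmas rdefs = mkrule_def natBL_def natBR_def natIL_def natIR_def cancBI_def cancIB_def r_mass_def r_mul_def r_mur_def r_coass_def r_cul_def r_cur_def r_bi_def r_Du_def r_em_def r_eu_def r_antL_def r_antR_def r_SSi_def r_SiS_def r_amod_def r_aun_def r_aR_def r_aS_def r_dS_def r_P_def r_Pi_def r_Su_def r_eS_def r_C3_def r_C1_def r_C2_def r_Sm_def r_C3b_def r_C1b_def r_C2b_def r_DS_def r_Sim_def r_DSi_def r_Siu_def r_eSi_def r_T2_def r_PPi_def r_PiP_def r_T1p_def r_R1_def r_R2_def r_K_def r_R4_def r_T1_def r_S1_def r_S2_def r_S3_def r_S4_def r_S5_def r_M2_def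

context hctx begin

lemma v_r_mass: "valid r_mass"
  unfolding r_mass_def by (rule valid_mkrule) (simp_all add: hopf_ax[simplified] mod_ax)

lemma v_r_mul: "valid r_mul"
  unfolding r_mul_def by (rule valid_mkrule) (simp_all add: hopf_ax[simplified] mod_ax)

lemma v_r_mur: "valid r_mur"
  unfolding r_mur_def by (rule valid_mkrule) (simp_all add: hopf_ax[simplified] mod_ax)

lemma v_r_coass: "valid r_coass"
  unfolding r_coass_def by (rule valid_mkrule) (simp_all add: hopf_ax[simplified] mod_ax)

lemma v_r_cul: "valid r_cul"
  unfolding r_cul_def by (rule valid_mkrule) (simp_all add: hopf_ax[simplified] mod_ax)

lemma v_r_cur: "valid r_cur"
  unfolding r_cur_def by (rule valid_mkrule) (simp_all add: hopf_ax[simplified] mod_ax)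

lemma v_r_bi: "valid r_bi"
  unfolding r_bi_def by (rule valid_mkrule) (simp_all add: hopf_ax[simplified] mod_ax)

lemma v_r_Du: "valid r_Du"
  unfolding r_Du_def by (rule valid_mkrule) (simp_all add: hopf_ax[simplified] mod_ax)

lemma v_r_em: "valid r_em"
  unfolding r_em_def by (rule valid_mkrule) (simp_all add: hopf_ax[simplified] mod_ax)

lemma v_r_eu: "valid r_eu"
  unfolding r_eu_def by (rule valid_mkrule) (simp_all add: hopf_ax[simplified] mod_ax)

lemma v_r_antL: "valid r_antL"
  unfolding r_antL_def by (rule valid_mkrule) (simp_all add: hopf_ax[simplified] mod_ax)

lemma v_r_antR: "valid r_antR"
  unfolding r_antR_def by (rule valid_mkrule) (simp_all add: hopf_ax[simplified] mod_ax)

lemma v_r_SSi: "valid r_SSi"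
  unfolding r_SSi_def by (rule valid_mkrule) (simp_all add: inv_props(3)[OF isoS])

lemma v_r_SiS: "valid r_SiS"
  unfolding r_SiS_def by (rule valid_mkrule) (simp_all add: inv_props(2)[OF isoS])

lemma v_r_amod: "valid r_amod"
  unfolding r_amod_def by (rule valid_mkrule) (simp_all add: hopf_ax[simplified] mod_ax)

lemma v_r_aun: "valid r_aun"
  unfolding r_aun_def by (rule valid_mkrule) (simp_all add: hopf_ax[simplified] mod_ax)

lemma v_r_aR: "valid r_aR"
  unfolding r_aR_def by (rule valid_mkrule) (simp_all add: R_act_def smash_act_def smash_coact_def phi_def phiI_def tens_act_def Let_def)

lemma v_r_aS: "valid r_aS"
  unfolding r_aS_def by (rule valid_mkrule) (simp_all add: R_act_def smash_act_def smash_coact_def phi_def phiI_def tens_act_def Let_def)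

lemma v_r_dS: "valid r_dS"
  unfolding r_dS_def by (rule valid_mkrule) (simp_all add: R_act_def smash_act_def smash_coact_def phi_def phiI_def tens_act_def Let_def)

lemma v_r_P: "valid r_P"
  unfolding r_P_def by (rule valid_mkrule) (simp_all add: R_act_def smash_act_def smash_coact_def phi_def phiI_def tens_act_def Let_def)

lemma v_r_Pi: "valid r_Pi"
  unfolding r_Pi_def by (rule valid_mkrule) (simp_all add: R_act_def smash_act_def smash_coact_def phi_def phiI_def tens_act_def Let_def)

lemma v_r_Su: "valid r_Su"
  unfolding r_Su_def by (rule valid_run[where ops="[Rv 2 0 r_mur, Sw 1, Rv 0 0 r_Du, Rw 1 0 r_antL, Rw 0 0 r_eu]"]) (simp add: rdefs fits_def ap_def eval_nat_numeral, simp add: rdefs fits_def ap_def eval_nat_numeral, simp add: v_r_Du v_r_antL v_r_eu v_r_mur)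

lemma v_r_eS: "valid r_eS"
  unfolding r_eS_def by (rule valid_run[where ops="[Rv 0 0 r_cur, Sw 1, Sw 2, Rv 2 0 r_em, Rw 0 0 r_antL, Sw 0, Sw 1, Rw 0 1 r_eu]"]) (simp add: rdefs fits_def ap_def eval_nat_numeral, simp add: rdefs fits_def ap_def eval_nat_numeral, simp add: v_r_antL v_r_cur v_r_em v_r_eu)

lemma v_r_C3: "valid r_C3"
  unfolding r_C3_def by (rule valid_run[where ops="[Sw 2, Sw 1, Rw 0 0 r_coass, Rv 3 2 (natBR 0 GD), Sw 1, Sw 0, Sw 2, Sw 1, Rw 0 1 r_coass, Sw 1, Sw 2, Sw 3, Sw 5, Sw 4, Rw 2 1 (natBL GD 0), Sw 0]"]) (simp add: rdefs fits_def ap_def eval_nat_numeral, simp add: rdefs fits_def ap_def eval_nat_numeral, simp add: v_r_coass valid_natBL valid_natBR)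

lemma v_r_C1: "valid r_C1"
  unfolding r_C1_def by (rule valid_run[where ops="[Sw 4, Rv 0 0 r_bi, Rw 1 0 r_antL, Rw 0 0 r_em]"]) (simp add: rdefs fits_def ap_def eval_nat_numeral, simp add: rdefs fits_def ap_def eval_nat_numeral, simp add: v_r_antL v_r_bi v_r_em)

lemma v_r_C2: "valid r_C2"
  unfolding r_C2_def by (rule valid_run[where ops="[Sw 3, Sw 4, Sw 5, Sw 6, Rw 7 0 r_mass, Sw 3, Rw 4 2 (natBL GS 0), Rw 3 2 (natBR 0 GS), Rv 6 1 r_mass, Rw 1 1 (natBR 0 GD), Sw 4, Rw 2 1 r_antR, Rv 1 1 (natBR 0 Ge), Sw 2, Sw 1, Sw 2, Sw 3, Rw 2 1 r_mul, Sw 2, Rw 0 0 r_antR, Sw 1]"]) (simp add: rdefs fits_def ap_def eval_nat_numeral, simp add: rdefs fits_def ap_def eval_nat_numeral, simp add: v_r_antR v_r_mass v_r_mul valid_natBL valid_natBR)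

lemma v_r_Sm: "valid r_Sm"
  unfolding r_Sm_def by (rule valid_run[where ops="[Rv 0 1 r_cur, Rv 0 0 r_cur, Rv 6 0 r_mur, Sw 1, Rw 2 1 (natBL Ge 0), Sw 6, Sw 5, Rv 3 2 r_C2, Sw 11, Sw 12, Rv 13 0 r_mass, Rv 0 0 r_C3, Sw 10, Sw 9, Sw 8, Sw 7, Sw 6, Sw 11, Sw 10, Sw 9, Sw 8, Sw 7, Sw 12, Sw 11, Sw 10, Sw 9, Rw 3 0 r_C1, Sw 3, Rv 2 1 (natBR 0 Ge), Sw 2, Sw 1, Rw 0 0 r_cul, Rw 0 1 r_cul, Sw 0, Sw 1, Sw 2, Sw 3, Rw 4 0 r_mul]"]) (simp add: rdefs fits_def ap_def eval_nat_numeral, simp add: rdefs fits_def ap_def eval_nat_numeral, simp add: v_r_C1 v_r_C2 v_r_C3 v_r_cul v_r_cur v_r_mass v_r_mul v_r_mur valid_natBL valid_natBR)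

lemma v_r_C3b: "valid r_C3b"
  unfolding r_C3b_def by (rule valid_run[where ops="[Sw 1, Sw 2, Rw 3 0 r_mass, Rw 1 2 (natBL Gm 0), Sw 5, Sw 4, Rw 3 3 r_mass, Sw 0, Sw 4, Sw 3, Rv 1 1 (natBR 0 Gm), Sw 2, Sw 4]"]) (simp add: rdefs fits_def ap_def eval_nat_numeral, simp add: rdefs fits_def ap_def eval_nat_numeral, simp add: v_r_mass valid_natBL valid_natBR)

lemma v_r_C1b: "valid r_C1b"
  unfolding r_C1b_def by (rule valid_run[where ops="[Sw 1, Rv 2 0 r_bi, Rw 0 0 r_antR, Sw 0, Sw 1, Rw 0 1 r_Du, Sw 1, Sw 0]"]) (simp add: rdefs fits_def ap_def eval_nat_numeral, simp add: rdefs fits_def ap_def eval_nat_numeral, simp add: v_r_Du v_r_antR v_r_bi)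

lemma v_r_C2b: "valid r_C2b"
  unfolding r_C2b_def by (rule valid_run[where ops="[Rw 0 0 r_coass, Sw 4, Sw 3, Sw 4, Sw 5, Rw 4 1 (natBL GS 0), Sw 2, Rv 1 1 r_coass, Rw 2 0 (natBR 0 GD), Sw 4, Sw 5, Rw 3 0 r_antL, Rv 2 0 (natBR 0 Ge), Rw 1 1 r_cul, Sw 1, Sw 2, Rw 0 0 r_antL, Sw 1]"]) (simp add: rdefs fits_def ap_def eval_nat_numeral, simp add: rdefs fits_def ap_def eval_nat_numeral, simp add: v_r_antL v_r_coass v_r_cul valid_natBL valid_natBR)

lemma v_r_DS: "valid r_DS"
  unfolding r_DS_def by (rule valid_run[where ops="[Rv 0 0 r_cul, Rv 4 1 r_mul, Rv 6 0 r_mul, Rv 4 0 (natBL Gu 0), Sw 6, Sw 5, Sw 4, Sw 3, Sw 2, Sw 4, Sw 3, Rv 1 0 r_C2b, Rw 0 0 r_coass, Sw 9, Sw 8, Sw 7, Sw 10, Sw 9, Sw 8, Sw 13, Rw 9 0 r_C3b, Sw 5, Sw 4, Sw 3, Sw 2, Sw 6, Sw 5, Sw 4, Sw 3, Sw 7, Sw 6, Sw 5, Sw 4, Sw 8, Sw 7, Sw 6, Sw 5, Sw 9, Sw 8, Sw 7, Sw 6, Sw 10, Sw 9, Sw 8, Sw 7, Rw 1 1 r_C1b, Rw 0 0 r_cur, Sw 1, Sw 0, Sw 2, Sw 1, Sw 4, Sw 3, Sw 2, Sw 5, Sw 4, Rw 3 1 (natBR 0 Gu), Sw 4, Sw 3,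 Sw 2, Sw 3, Sw 5, Sw 4, Rw 3 0 r_mur, Sw 2, Sw 3, Sw 4, Rw 3 1 r_mur, Sw 2]"]) (simp add: rdefs fits_def ap_def eval_nat_numeral, simp add: rdefs fits_def ap_def eval_nat_numeral, simp add: v_r_C1b v_r_C2b v_r_C3b v_r_coass v_r_cul v_r_cur v_r_mul v_r_mur valid_natBL valid_natBR)

lemma v_r_Sim: "valid r_Sim"
  unfolding r_Sim_def by (rule valid_run[where ops="[Rv 0 0 (cancBI 0 0), Rv 1 0 r_SSi, Rv 1 1 r_SSi, Sw 2, Sw 3, Rv 3 0 r_Sm, Rw 4 0 r_SiS, Rv 0 0 (natIL GSi 0), Rv 1 0 (natIR 0 GSi)]"]) (simp add: rdefs fits_def ap_def eval_nat_numeral, simp add: rdefs fits_def ap_def eval_nat_numeral, simp add: v_r_SSi v_r_SiS v_r_Sm valid_cancBI valid_natIL valid_natIR)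

lemma v_r_DSi: "valid r_DSi"
  unfolding r_DSi_def by (rule valid_run[where ops="[Rv 2 0 (cancIB 0 0), Rv 3 0 r_SiS, Rv 3 1 r_SiS, Sw 4, Sw 3, Rv 1 0 r_DS, Rw 0 0 r_SSi, Sw 1]"]) (simp add: rdefs fits_def ap_def eval_nat_numeral, simp add: rdefs fits_def ap_def eval_nat_numeral, simp add: v_r_DS v_r_SSi v_r_SiS valid_cancIB)

lemma v_r_Siu: "valid r_Siu"
  unfolding r_Siu_def by (rule valid_run[where ops="[Rv 0 0 r_Su, Rw 1 0 r_SiS]"]) (simp add: rdefs fits_def ap_def eval_nat_numeral, simp add: rdefs fits_def ap_def eval_nat_numeral, simp add: v_r_SiS v_r_Su)

lemma v_r_eSi: "valid r_eSi"
  unfolding r_eSi_def by (rule valid_run[where ops="[Rv 1 0 r_eS, Rw 0 0 r_SSi]"]) (simp add: rdefs fits_def ap_def eval_nat_numeral, simp add: rdefs fits_def ap_def eval_nat_numeral, simp add: v_r_SSi v_r_eS)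

lemma v_r_T2: "valid r_T2"
  unfolding r_T2_def by (rule valid_run[where ops="[Rw 2 1 r_P, Rw 0 0 r_Pi, Rw 0 0 (natBR 1 GS), Rw 1 0 r_DS, Sw 3, Sw 4, Rw 3 1 r_SiS, Rv 0 0 (natBR 1 GD), Rv 1 0 (natBR 1 (Gb 0 0)), Sw 4, Rw 3 1 (cancIB 0 1), Rv 0 0 r_dS]"]) (simp add: rdefs fits_def ap_def eval_nat_numeral, simp add: rdefs fits_def ap_def eval_nat_numeral, simp add: v_r_DS v_r_P v_r_Pi v_r_SiS v_r_dS valid_cancIB valid_natBR)

lemma v_r_PPi: "valid r_PPi"
  unfolding r_PPi_def by (rule valid_run[where ops="[Rw 1 0 r_P, Rw 0 0 r_Pi, Rw 2 0 (natIL GSi 1), Rw 1 0 (cancIB 0 1), Rw 0 1 r_SiS]"]) (simp add: rdefs fits_def ap_def eval_nat_numeral, simp add: rdefs fits_def ap_def eval_nat_numeral, simp add: v_r_P v_r_Pi v_r_SiS valid_cancIB valid_natIL)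

lemma v_r_PiP: "valid r_PiP"
  unfolding r_PiP_def by (rule valid_run[where ops="[Rw 0 0 r_P, Rw 2 0 r_Pi, Rw 2 0 (natBR 1 GS), Rw 1 0 (cancBI 0 1), Rw 0 0 r_SSi]"]) (simp add: rdefs fits_def ap_def eval_nat_numeral, simp add: rdefs fits_def ap_def eval_nat_numeral, simp add: v_r_P v_r_Pi v_r_SSi valid_cancBI valid_natBR)

lemma v_r_T1p: "valid r_T1p"
  unfolding r_T1p_def by (rule valid_run[where ops="[Rw 0 1 r_P, Rw 2 0 r_aS, Sw 7, Rw 8 1 (natIR 0 Gm), Rw 0 1 (natIL GSi 1), Sw 1, Sw 2, Sw 3, Sw 4, Sw 5, Sw 6, Sw 7, Rw 8 2 (natIR 0 GSi), Sw 2, Sw 3, Sw 4, Rw 5 0 (natIL GSi 1), Rw 6 1 (natIL GSi 0), Rw 7 2 (natIL GSi 0), Rw 4 0 (natIR 0 Ga), Sw 6, Sw 7, Sw 8, Sw 9, Sw 10, Sw 11, Rw 10 2 r_mass, Sw 0, Sw 1, Rv 2 2 (cancIB 0 0), Rv 3 2 (natIR 0 (Gb 0 1)), Sw 5, Sw 6, Rv 7 2 (natIL (Gbi 0 0) 0), Sw 9, Rv 8 3 (natIL GSi 0), Rv 10 2 (natIL GSi 0), Sw 9, Sw 8, Rv 10 2 (natIL Gm 0), Rv 12 2 r_SiS, Rv 11 2 (natIR 0 GS), Rv 12 2 (natIR 0 GSi), Rv 7 2 (natIR 0 GSi), Rv 8 2 (natIL GSi 0), Sw 7, Rv 7 2 r_Sim,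 Sw 8, Sw 7, Rv 9 2 r_Sim, Sw 10, Sw 9, Sw 8, Sw 7, Rv 3 1 (cancIB 0 0), Sw 4, Rw 1 1 (natBL GD 0), Rv 6 0 (natIR 0 Ga), Sw 7, Rv 4 1 (natIR 0 Ga), Sw 5, Rv 6 2 (cancIB 0 1), Rv 8 0 (natIL Gm 1), Sw 7, Sw 6, Sw 5, Sw 4, Sw 3, Sw 2, Rv 8 0 (natIL Gm 1), Rv 9 0 (natIL GSi 1), Rv 0 0 r_aR, Rv 1 0 r_P]"]) (simp add: rdefs fits_def ap_def eval_nat_numeral, simp add: rdefs fits_def ap_def eval_nat_numeral, simp add: v_r_P v_r_SiS v_r_Sim v_r_aR v_r_aS v_r_mass valid_cancIB valid_natBL valid_natIL valid_natIR)

lemma v_r_R1: "valid r_R1"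
  unfolding r_R1_def by (rule valid_run[where ops="[Rw 1 0 r_aR, Rw 0 0 r_bi, Sw 3, Sw 4, Rw 5 0 r_mass, Sw 6, Sw 7, Sw 8, Sw 9, Sw 10, Rw 11 0 r_mass, Sw 5, Sw 6, Sw 7, Sw 8, Sw 9, Rw 10 1 r_mass, Rw 3 2 (natBL Gm 0), Rw 5 3 r_bi, Sw 8, Sw 9, Rw 10 3 r_amod, Rw 8 5 (natBL Gm 1), Sw 12, Sw 11, Rw 10 6 r_Sm, Sw 13, Sw 14, Rw 15 3 (natBR 1 Gm), Rw 14 3 (natBL Ga 0), Rw 13 4 (natBL Ga 0), Rw 17 4 (natBL Ga 0), Sw 16, Rw 15 5 (natBL Ga 0), Sw 10, Rw 11 6 (natBL GS 0), Rw 10 6 (natBR 0 GS), Sw 12, Rw 11 5 (natBR 1 GS), Sw 13, Rw 12 4 (natBR 0 GS), Sw 17, Sw 16, Sw 15, Sw 14, Rw 13 3 (natBR 0 GS), Sw 14, Sw 13, Sw 12, Sw 15, Sw 14, Sw 13, Rw 12 6 (natBR 1 GS), Sw 13, Sw 16, Sw 15, Rw 14 5 (natBR 0 GS), Sw 15, Sw 18, Sw 17, Rw 16 4 (natBR 0 GS), Sw 0, Sw 2, Sw 1, Sw 5, Sw 4, Sw 3, Sw 2, Rv 1 2 (natBL GD 0), Rv 6 2 (natBL GD 0), Sw 3, Sw 2, Sw 1, Sw 4, Sw 3, Sw 2, Sw 5, Sw 4, Sw 3, Rv 2 1 (natBL GD 0), Sw 4, Sw 5, Sw 6, Sw 7,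 Sw 9, Sw 8, Sw 10, Sw 9, Sw 11, Sw 10, Sw 12, Sw 11, Sw 13, Sw 12, Rw 10 5 (natBL (Gb 0 1) 0), Sw 8, Sw 9, Sw 15, Sw 14, Sw 13, Sw 12, Sw 13, Sw 14, Sw 17, Sw 16, Sw 15, Rw 10 4 (natBL (Gb 0 0) 0), Sw 12, Sw 13, Sw 14, Sw 11, Sw 12, Sw 10, Sw 11, Sw 9, Sw 10, Sw 8, Sw 9, Sw 7, Sw 6, Sw 5, Sw 4, Rw 2 1 (natBL GD 0), Sw 3, Sw 4, Sw 5, Sw 2, Sw 3, Sw 4, Sw 1, Sw 2, Sw 3, Rw 6 2 (natBL GD 0), Sw 7, Sw 8, Sw 9, Sw 6, Sw 7, Sw 8, Sw 5, Sw 6, Sw 7, Sw 4, Sw 5, Sw 6, Rw 10 3 (natBL GD 0), Rw 1 2 (natBL GD 0), Rv 15 4 (natBR 0 GS), Sw 16, Sw 17, Rv 14 5 (natBR 0 GS), Sw 15, Rv 13 6 (natBR 1 GS), Sw 14, Sw 13, Sw 12, Sw 11, Sw 10, Rv 9 3 (natBR 0 GS), Sw 8, Sw 7, Sw 6, Rv 5 3 (natBR 0 GS), Rv 4 4 (natBR 1 GS), Rv 15 5 (natBL Ga 0), Sw 14, Rv 12 5 (natBR 0 Ga), Sw 11, Sw 10, Sw 9, Sw 8, Sw 7, Rv 15 4 (natBL Ga 0), Sw 14, Rv 5 3 (natBL Ga 0), Sw 4, Rv 16 2 r_mass, Sw 15, Sw 14, Sw 13, Sw 12, Sw 11, Rv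 9 2 (natBR 0 Gm), Sw 8, Sw 7, Rv 16 1 r_mass, Sw 15, Sw 14, Sw 13, Sw 12, Sw 11, Rv 9 1 (natBR 0 Gm), Sw 8, Rv 16 0 r_mass, Sw 15, Sw 14, Sw 13, Sw 12, Sw 11, Rv 7 1 r_mass, Sw 6, Sw 5, Sw 4, Sw 3, Sw 2, Rv 9 0 r_aR, Rv 0 1 r_aR]"]) (simp add: rdefs fits_def ap_def eval_nat_numeral, simp add: rdefs fits_def ap_def eval_nat_numeral, simp add: v_r_Sm v_r_aR v_r_amod v_r_bi v_r_mass valid_natBL valid_natBR)

lemma v_r_R2: "valid r_R2"
  unfolding r_R2_def by (rule valid_run[where ops="[Rw 1 0 r_aR, Sw 3, Sw 4, Sw 5, Sw 6, Sw 7, Rw 8 0 r_mass, Sw 5, Rw 6 2 (natBL Ga 0), Rw 5 3 (natBR 1 GS), Rw 6 2 (natBR 0 GS), Rv 2 1 (natBL GD 0), Rw 0 0 r_Du, Sw 0, Sw 1, Rw 0 0 r_Du, Sw 0, Sw 2, Sw 1, Sw 3, Rw 2 0 (natBL Gu 0), Rw 0 0 (natBL Gu 0), Sw 2, Sw 1, Sw 3, Sw 2, Sw 4, Rw 3 1 (natBL Gu 0), Rw 0 1 (natBL Gu 1), Rw 0 1 (natBR 1 Gu), Sw 2, Sw 1, Sw 4, Sw 3, Sw 2, Sw 3, Sw 5, Sw 4, Rw 3 0 r_mul, Rw 0 1 r_Su, Rw 0 0 r_mur, Rw 0 1 r_aun]"]) (simp add: rdefs fits_def ap_def eval_nat_numeral,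 simp add: rdefs fits_def ap_def eval_nat_numeral, simp add: v_r_Du v_r_Su v_r_aR v_r_aun v_r_mass v_r_mul v_r_mur valid_natBL valid_natBR)

lemma v_r_K: "valid r_K"
  unfolding r_K_def by (rule valid_run[where ops="[Rw 0 0 r_aR, Rw 8 0 r_bi, Sw 7, Sw 6, Sw 5, Sw 4, Sw 3, Rw 2 0 r_bi, Sw 5, Sw 6, Sw 7, Sw 8, Sw 9, Sw 10, Sw 11, Sw 12, Rw 13 0 r_mass, Sw 1, Rw 0 0 r_coass, Sw 5, Sw 6, Sw 7, Sw 8, Sw 9, Sw 10, Rw 11 2 (natBL Gm 0), Sw 15, Sw 14, Rw 13 3 r_mass, Sw 4, Sw 3, Sw 5, Sw 4, Sw 7, Sw 6, Sw 5, Sw 7, Sw 6, Sw 8, Sw 7, Rw 6 3 (natBL Ga 0), Rw 5 4 (natBR 1 GS), Rw 6 3 (natBR 0 GS), Sw 10, Sw 9, Sw 8, Rw 7 3 r_DS, Sw 11, Sw 10, Sw 9, Sw 13, Sw 12, Sw 11, Rw 10 3 (natBR 0 GS), Sw 13, Sw 12, Sw 11, Sw 14, Sw 13, Rw 12 2 (natBR 0 GS), Rv 2 2 (natBL GD 0), Sw 9, Sw 8, Sw 7, Sw 6, Sw 5, Rv 4 2 (natBR 0 GD), Rv 3 3 (natBR 0 GD), Rv 10 4 (natBR 0 GD), Sw 7, Sw 6, Sw 8, Sw 7, Sw 9, Sw 8, Rv 7 5 (natBR 1 GD), Rv 6 5 (natBL GD 1), Rv 5 4 (natBL GD 0), Rv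 4 3 (natBL GD 0), Sw 3, Sw 6, Sw 12, Sw 11, Sw 10, Sw 9, Sw 8, Sw 13, Sw 12, Sw 11, Sw 10, Sw 18, Sw 17, Sw 16, Sw 15, Sw 14, Sw 13, Sw 12, Sw 11, Rw 4 4 (natBR 0 GD), Rv 2 2 r_coass, Sw 3, Sw 4, Rw 5 2 (natBL GD 0), Rw 6 3 (natBL GD 0), Sw 7, Sw 8, Sw 6, Sw 7, Rv 1 1 r_coass, Sw 2, Sw 3, Rw 4 1 (natBL GD 0), Sw 5, Sw 4, Sw 3, Rv 16 2 (natBR 0 GS), Sw 17, Sw 18, Sw 19, Rv 15 3 (natBR 0 GS), Sw 16, Sw 17, Rv 14 4 (natBR 0 GS), Rv 13 5 (natBR 0 GS), Sw 12, Rv 11 6 (natBR 1 GS), Sw 12, Sw 11, Rv 15 4 (natBL GS 0), Sw 16, Sw 14, Sw 13, Sw 12, Rv 11 4 (natBR 0 GS), Rv 10 5 (natBR 1 GS), Rv 14 5 (natBL Ga 0), Sw 13, Rv 11 4 (natBL Ga 0), Sw 10, Rv 15 3 (natBL Gm 0), Sw 14, Sw 13, Rv 16 2 (natBL Gm 0), Sw 15, Sw 14, Rv 0 0 r_coass, Sw 1, Sw 2, Rv 18 0 r_mass, Sw 17, Sw 16, Sw 15, Rv 13 2 r_mass, Sw 12, Sw 11, Sw 10, Sw 9, Sw 8, Rv 6 2 r_aR, Sw 6]"]) (simp add: rdefs fits_def ap_def eval_nat_numeral, simp add: rdefs fits_def ap_def eval_nat_numeral, simp add: v_r_DS v_r_aR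 v_r_bi v_r_coass v_r_mass valid_natBL valid_natBR)

lemma v_r_R4: "valid r_R4"
  unfolding r_R4_def by (rule valid_run[where ops="[Sw 3, Rv 3 1 r_mur, Sw 4, Sw 3, Rv 4 2 (natBR 0 Gu), Rv 4 3 (natBR 1 Gu), Sw 3, Sw 2, Sw 1, Sw 0, Rv 0 2 (natBL Gu 1), Sw 1, Rv 0 1 (natBL Gu 0), Sw 1, Sw 0, Rv 1 1 r_cur, Rv 2 2 r_antL, Rw 4 2 (natBL Gm 0), Sw 3, Rw 4 2 (natBL GS 0), Rw 6 3 (natBL Gm 1), Sw 8, Sw 9, Sw 10, Sw 5, Sw 4, Rw 6 3 (natBL GS 1), Sw 7, Sw 8, Sw 9, Rw 11 3 (natBR 1 Gm), Rw 13 2 (natBR 0 Gm), Sw 12, Rv 0 0 r_coass, Sw 1, Sw 2, Sw 3, Sw 4, Sw 5, Rv 0 0 r_coass, Sw 1, Sw 2, Rv 15 1 r_mass, Sw 14, Sw 13, Rv 16 0 r_mass, Sw 15, Sw 14, Rv 13 0 r_mass, Sw 12, Sw 11, Sw 10, Sw 9, Rv 3 0 r_K]"]) (simp add: rdefs fits_def ap_def eval_nat_numeral, simp add: rdefs fits_def ap_def eval_nat_numeral, simp add: v_r_K v_r_antL v_r_coass v_r_cur v_r_mass v_r_mur valid_natBL valid_natBR)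

lemma v_r_T1: "valid r_T1"
  unfolding r_T1_def by (rule valid_run[where ops="[Rv 0 1 r_PPi, Rw 1 0 r_T1p]"]) (simp add: rdefs fits_def ap_def eval_nat_numeral, simp add: rdefs fits_def ap_def eval_nat_numeral, simp add: v_r_PPi v_r_T1p)

lemma v_r_S1: "valid r_S1"
  unfolding r_S1_def by (rule valid_run[where ops="[Rv 0 2 r_PPi, Sw 1, Rw 2 0 r_T1p, Rw 1 0 r_R1, Rv 2 0 r_T1p, Rv 1 1 r_T1p, Rw 0 2 r_PPi]"]) (simp add: rdefs fits_def ap_def eval_nat_numeral, simp add: rdefs fits_def ap_def eval_nat_numeral, simp add: v_r_PPi v_r_R1 v_r_T1p)

lemma v_r_S2: "valid r_S2"
  unfolding r_S2_def by (rule valid_run[where ops="[Rv 0 0 r_PPi, Sw 1, Rw 2 0 r_T1p, Rw 1 0 r_R2, Rw 0 0 r_PPi]"]) (simp add: rdefs fits_def ap_def eval_nat_numeral, simp add: rdefs fits_def ap_def eval_nat_numeral, simp add: v_r_PPi v_r_R2 v_r_T1p)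

lemma v_r_S3: "valid r_S3"
  unfolding r_S3_def by (rule valid_run[where ops="[Rv 0 0 r_T2, Sw 2, Rw 1 0 r_coass, Rv 2 1 r_PiP, Rw 3 1 r_T2, Rw 0 0 r_T2]"]) (simp add: rdefs fits_def ap_def eval_nat_numeral, simp add: rdefs fits_def ap_def eval_nat_numeral, simp add: v_r_PiP v_r_T2 v_r_coass)

lemma v_r_S4: "valid r_S4"
  unfolding r_S4_def by (rule valid_run[where ops="[Rv 0 0 r_T2, Sw 2, Rw 1 0 r_cul, Rw 0 0 r_PPi]"]) (simp add: rdefs fits_def ap_def eval_nat_numeral, simp add: rdefs fits_def ap_def eval_nat_numeral, simp add: v_r_PPi v_r_T2 v_r_cul)

lemma v_r_S5: "valid r_S5"
  unfolding r_S5_def by (rule valid_run[where ops="[Sw 0, Rv 0 1 r_T2, Sw 5, Rw 5 2 r_T1, Sw 4, Sw 3, Rw 2 2 r_PiP, Sw 1, Sw 5, Sw 4, Rw 1 0 r_R4, Sw 0, Rw 1 1 (natBR 0 GPi), Sw 8, Rv 6 1 (natBL GP 0), Rv 5 0 r_PiP, Rv 3 0 r_T1, Rw 4 0 r_T2]"]) (simp add: rdefs fits_def ap_def eval_nat_numeral, simp add: rdefs fits_def ap_def eval_nat_numeral, simp add: v_r_PiP v_r_R4 v_r_T1 v_r_T2 valid_natBL valid_natBR)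

lemma v_r_M2: "valid r_M2"
  unfolding r_M2_def by (rule valid_run[where ops="[Rv 1 0 r_T2, Rw 0 0 r_PiP]"]) (simp add: rdefs fits_def ap_def eval_nat_numeral, simp add: rdefs fits_def ap_def eval_nat_numeral, simp add: v_r_PiP v_r_T2)

lemma fa_PPi: "interp (EC (EG GP) (EG GPi)) = interp (EI [1,0])"
  by (rule valid_interp[OF v_r_PPi[unfolded r_PPi_def]]) (simp_all add: rdefs fits_def ap_def eval_nat_numeral)

lemma fa_PiP: "interp (EC (EG GPi) (EG GP)) = interp (EI [0,1])"
  by (rule valid_interp[OF v_r_PiP[unfolded r_PiP_def]]) (simp_all add: rdefs fits_def ap_def eval_nat_numeral)

lemma fa_T1: "interp (EG GaS) = interp (EC (EG GP) (EC (EG GaR) (ET (EI [0]) (EG GPi))))"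
  by (rule valid_interp[OF v_r_T1[unfolded r_T1_def]]) (simp_all add: rdefs fits_def ap_def eval_nat_numeral)

lemma fa_T2: "interp (EC (ET (EI [0]) (EG GP)) (EC (ET (EG GD) (EI [1])) (EG GPi))) = interp (EG GdS)"
  by (rule valid_interp[OF v_r_T2[unfolded r_T2_def]]) (simp_all add: rdefs fits_def ap_def eval_nat_numeral)

lemma fa_T1p: "interp (EC (EG GaS) (ET (EI [0]) (EG GP))) = interp (EC (EG GP) (EG GaR))"
  by (rule valid_interp[OF v_r_T1p[unfolded r_T1p_def]]) (simp_all add: rdefs fits_def ap_def eval_nat_numeral)

lemma fa_M2: "interp (EC (EG GdS) (EG GP)) = interp (EC (ET (EI [0]) (EG GP)) (ET (EG GD) (EI [1])))"
  by (rule valid_interp[OF v_r_M2[unfolded r_M2_def]]) (simp_all add: rdefs fits_def ap_def eval_nat_numeral)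

lemma fa_S1: "interp (EC (EG GaS) (ET (EG Gm) (EI [1,0]))) = interp (EC (EG GaS) (ET (EI [0]) (EG GaS)))"
  by (rule valid_interp[OF v_r_S1[unfolded r_S1_def]]) (simp_all add: rdefs fits_def ap_def eval_nat_numeral)

lemma fa_S2: "interp (EC (EG GaS) (ET (EG Gu) (EI [1,0]))) = interp (EI [1,0])"
  by (rule valid_interp[OF v_r_S2[unfolded r_S2_def]]) (simp_all add: rdefs fits_def ap_def eval_nat_numeral)

lemma fa_S3: "interp (EC (ET (EG GD) (EI [1,0])) (EG GdS)) = interp (EC (ET (EI [0]) (EG GdS)) (EG GdS))"
  by (rule valid_interp[OF v_r_S3[unfolded r_S3_def]]) (simp_all add: rdefs fits_def ap_def eval_nat_numeral)

lemma fa_S4: "interp (EC (ET (EG Ge) (EI [1,0])) (EG GdS)) = interp (EI [1,0])"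
  by (rule valid_interp[OF v_r_S4[unfolded r_S4_def]]) (simp_all add: rdefs fits_def ap_def eval_nat_numeral)

lemma fa_S5: "interp (EC (ET (EG Gm) (EG GaS)) (EC (ET (EI [0]) (ET (EG (Gb 0 0)) (EI [1,0]))) (ET (EG GD) (EG GdS)))) = interp (EC (ET (EG Gm) (EI [1,0])) (EC (ET (EI [0]) (EBL [1,0] 0)) (EC (ET (EG GdS) (EI [0])) (EC (ET (EG GaS) (EI [0])) (EC (ET (EI [0]) (EBR 0 [1,0])) (ET (EG GD) (EI [1,0])))))))"
  by (rule valid_interp[OF v_r_S5[unfolded r_S5_def]]) (simp_all add: rdefs fits_def ap_def eval_nat_numeral)

end



theorem lemma4p4:
  fixes C :: "('o, 'm) bcat"
    and H A :: 'o
    and m u \<Delta> \<epsilon> S aA mA uA :: 'm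
  assumes "braided_monoidal_cat C"
    and "hopf_algebra C H m u \<Delta> \<epsilon> S"
    and "iso C S"
    and "hmod_algebra C H m u \<Delta> \<epsilon> A aA mA uA"
  shows "iso C (phi C H S A)
    \<and> inv C (phi C H S A) = Cmp C (Br C A H) (Tm C (Idm C A) S)
    \<and> smash_act C H m \<Delta> S A aA
        = chain C [phi C H S A, R_act C H m \<Delta> S A aA, Tm C (Idm C H) (inv C (phi C H S A))]
    \<and> smash_coact C H \<Delta> S A
        = chain C [Tm C (Idm C H) (phi C H S A), R_coact C \<Delta> A, inv C (phi C H S A)]
    \<and> yd_module C H m u \<Delta> \<epsilon> (Tob C A H) (smash_act C H m \<Delta> S A aA) (smash_coact C H \<Delta> S A)
    \<and> yd_morphism C H (Tob C H A) (R_act C H m \<Delta> S A aA) (R_coact C \<Delta> A)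
        (Tob C A H) (smash_act C H m \<Delta> S A aA) (smash_coact C H \<Delta> S A) (phi C H S A)"
proof -
  have hm: "hmodule C H m u A aA" using assms(4) by (simp add: hmod_algebra_def)
  interpret hctx C H A m u \<Delta> \<epsilon> S aA
    by unfold_locales (use assms hm in auto)
  have PPi: "Cmp C (phi C H S A) phiI = Idm C (Tob C A H)" using fa_PPi by simp
  have PiP: "Cmp C phiI (phi C H S A) = Idm C (Tob C H A)" using fa_PiP by simp
  have hP: "hom C (phi C H S A) (Tob C H A) (Tob C A H)" using gok_c[of GP] by simp
  have hPi: "hom C phiI (Tob C A H) (Tob C H A)" using gok_c[of GPi] by simp
  have isoP: "iso C (phi C H S A)" unfolding iso_def
    using hP hPi PPi PiP by (intro exI[of _ phiI]) (simp add: hom_def)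
  have invP: "inv C (phi C H S A) = phiI"
    by (rule inv_unique) (use hP hPi PPi PiP in \<open>simp_all add: hom_def\<close>)
  have T1: "smash_act C H m \<Delta> S A aA = Cmp C (phi C H S A) (Cmp C (R_act C H m \<Delta> S A aA) (Tm C (Idm C H) phiI))"
    using fa_T1 by simp
  have T2: "Cmp C (Tm C (Idm C H) (phi C H S A)) (Cmp C (Tm C \<Delta> (Idm C A)) phiI) = smash_coact C H \<Delta> S A"
    using fa_T2 by simp
  have T1p: "Cmp C (smash_act C H m \<Delta> S A aA) (Tm C (Idm C H) (phi C H S A)) = Cmp C (phi C H S A) (R_act C H m \<Delta> S A aA)"
    using fa_T1p by simp
  have M2: "Cmp C (smash_coact C H \<Delta> S A) (phi C H S A) = Cmp C (Tm C (Idm C H) (phi C H S A)) (Tm C \<Delta> (Idm C A))"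
    using fa_M2 by simp
  have S1: "Cmp C (smash_act C H m \<Delta> S A aA) (Tm C m (Idm C (Tob C A H))) = Cmp C (smash_act C H m \<Delta> S A aA) (Tm C (Idm C H) (smash_act C H m \<Delta> S A aA))"
    using fa_S1 by simp
  note S2 = fa_S2[simplified] and S3 = fa_S3[simplified] and S4 = fa_S4[simplified] and S5 = fa_S5[simplified]
  have haS: "hom C (smash_act C H m \<Delta> S A aA) (Tob C H (Tob C A H)) (Tob C A H)" using gok_c[of GaS] by simp
  have hdS: "hom C (smash_coact C H \<Delta> S A) (Tob C A H) (Tob C H (Tob C A H))" using gok_c[of GdS] by simp
  show ?thesis
    unfolding yd_module_def hmodule_def hcomodule_def yd_morphism_def R_coact_def invP
    using isoP T1 T2 T1p M2 S1 S2 S3 S4 S5 haS hdS hP by (simp add: phiI_def)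
qed

end
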